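(* Let $n\ge 2$, let $m$ and $k_1,\ldots,k_n$ be positive integers with $m+2\le\min\{k_1,\ldots,k_n\}$. For $i=1,\ldots,n$ let $G_i$ be an inflator graph of order $k_i$ with drop $m$, and let $M_i$ be an HCTV graph with $|V(M_i)|\ge m$. Let $F$ be the graph obtained from the cycle $C_n$ by inflating each vertex $v_i$ with $G_i$ and then inserting $M_i$ into each former edge $e_i$ of $C_n$. Then $F$ is a connected, nontraceable detour graph.
   Context: All graphs are finite and simple; the order of a path is its number of vertices. For a vertex $v$, $\tau(v)$ is the order of a longest path starting at $v$; a detour graph is one in which all vertices have the same $\tau(v)$; nontraceable means no hamiltonian path. $\tau_G(u,v)$ is the order of a longest $u$–$v$ path in $G$. Inflator graph with drop $m$: a graph $G$ of order $k\ge 3$ ($m\le k-2$) with two distinguished vertices $a,b$ such that (D-1) $\tau_G(a,b)=k-m$; (D-2) each distinguished vertex is an endvertex of a path containing all vertices except the other distinguished vertex; (D-3) $G$ has a hamiltonian path starting at each distinguished vertex; (D-4) for every $v\notin\{a,b\}$ there are disjoint paths $P$ from $v$ to one distinguished vertex and $Q$ with the other distinguished vertex as an endvertex ($Q$ possibly a single vertex) with $V(P)\cup V(Q)=V(G)$. HCTV graph: either $K_1$, or a graph with two vertices $x,y$ (anchors) such that every vertex is an endvertex of a hamiltonian path whose other endvertex is $x$ or $y$. Construction: $C_n$ has vertices $v_1,\ldots,v_n$ and edges $e_i=v_iv_{i+1}$ (indices mod $n$; for $n=2$, $C_2$ has two parallel edges between $v_1,v_2$). Inflating $v_i$ with $G_i$: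 delete $v_i$, add a copy of $G_i$, and join the two former neighbours (edge-ends) of $v_i$ to the two distinguished vertices of $G_i$ by a matching, using the two edges formerly incident with $v_i$. Inserting $M_i$ into an edge $e$: delete $e$ and join its two endvertices to the two anchors of $M_i$ by a matching if $M_i\ne K_1$, or both to the single vertex of $M_i$ if $M_i=K_1$. *)

theory Defs
  imports Main
begin

definition graph :: "'a set \<Rightarrow> 'a set set \<Rightarrow> bool" where
  "graph V E \<longleftrightarrow> finite V \<and> (\<forall>e\<in>E. e \<subseteq> V \<and> card e = 2)"

definition is_path :: "'a set \<Rightarrow> 'a set set \<Rightarrow> 'a list \<Rightarrow> bool" where
  "is_path V E p \<longleftrightarrow> p \<noteq> [] \<and> distinct p \<and> set p \<subseteq> V \<and>
     (\<forall>i. Suc i < length p \<longrightarrow> {p ! i, p ! Suc i} \<in> E)"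

definition tau :: "'a set \<Rightarrow> 'a set set \<Rightarrow> 'a \<Rightarrow> nat" where
  "tau V E v = Max {length p | p. is_path V E p \<and> hd p = v}"

definition detour_graph :: "'a set \<Rightarrow> 'a set set \<Rightarrow> bool" where
  "detour_graph V E \<longleftrightarrow> (\<forall>u\<in>V. \<forall>v\<in>V. tau V E u = tau V E v)"

definition traceable :: "'a set \<Rightarrow> 'a set set \<Rightarrow> bool" where
  "traceable V E \<longleftrightarrow> (\<exists>p. is_path V E p \<and> set p = V)"

definition connected_graph :: "'a set \<Rightarrow> 'a set set \<Rightarrow> bool" where
  "connected_graph V E \<longleftrightarrow> (\<forall>u\<in>V. \<forall>v\<in>V. \<exists>p. is_path V E p \<and> hd p = u \<and> last p = v)"

text \<open>Inflator graph of order k with drop m and distinguished vertices a, b.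
  (D-1) is written out: tau_G(a,b) = k - m, i.e. a longest a-b path has order k - m.\<close>
definition inflator :: "'a set \<Rightarrow> 'a set set \<Rightarrow> nat \<Rightarrow> nat \<Rightarrow> 'a \<Rightarrow> 'a \<Rightarrow> bool" where
  "inflator V E k m a b \<longleftrightarrow>
     graph V E \<and> card V = k \<and> k \<ge> 3 \<and> m \<le> k - 2 \<and>
     a \<in> V \<and> b \<in> V \<and> a \<noteq> b \<and>
     \<comment> \<open>(D-1)\<close>
     (\<exists>p. is_path V E p \<and> hd p = a \<and> last p = b \<and> length p = k - m) \<and>
     (\<forall>p. is_path V E p \<and> hd p = a \<and> last p = b \<longrightarrow> length p \<le> k - m) \<and>
     \<comment> \<open>(D-2)\<close>
     (\<exists>p. is_path V E p \<and> hd p = a \<and> set p = V - {b}) \<and>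
     (\<exists>p. is_path V E p \<and> hd p = b \<and> set p = V - {a}) \<and>
     \<comment> \<open>(D-3)\<close>
     (\<exists>p. is_path V E p \<and> hd p = a \<and> set p = V) \<and>
     (\<exists>p. is_path V E p \<and> hd p = b \<and> set p = V) \<and>
     \<comment> \<open>(D-4)\<close>
     (\<forall>v \<in> V - {a, b}. \<exists>P Q.
        is_path V E P \<and> is_path V E Q \<and> set P \<inter> set Q = {} \<and> set P \<union> set Q = V \<and>
        hd P = v \<and>
        ((last P = a \<and> hd Q = b) \<or> (last P = b \<and> hd Q = a)))"

definition hctv :: "'a set \<Rightarrow> 'a set set \<Rightarrow> 'a \<Rightarrow> 'a \<Rightarrow> bool" where
  "hctv V E x y \<longleftrightarrow> graph V E \<and>
     ((V = {x} \<and> y = x) \<or>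
      (x \<in> V \<and> y \<in> V \<and> x \<noteq> y \<and>
       (\<forall>v\<in>V. \<exists>p. is_path V E p \<and> set p = V \<and> hd p = v \<and> (last p = x \<or> last p = y))))"

text \<open>Cycle vertices v_0..v_{n-1}, edge e_i = v_i v_{(i+1) mod n}.
  Vertex v_i is replaced by a copy of G_i (tagged Inl (i,_)); edge e_i by a copy of M_i
  (tagged Inr (i,_)). Distinguished vertex b_i of G_i is joined to anchor x_i of M_i and
  anchor y_i of M_i to distinguished vertex a_{(i+1) mod n} of G_{(i+1) mod n}.
  If M_i = K_1 (x_i = y_i) both are joined to its single vertex.\<close>
definition cyc_V :: "nat \<Rightarrow> (nat \<Rightarrow> 'a set) \<Rightarrow> (nat \<Rightarrow> 'b set) \<Rightarrow> ((nat \<times> 'a) + (nat \<times> 'b)) set" where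
  "cyc_V n VG VM = {Inl (i, v) | i v. i < n \<and> v \<in> VG i} \<union> {Inr (i, v) | i v. i < n \<and> v \<in> VM i}"

definition cyc_E :: "nat \<Rightarrow> (nat \<Rightarrow> 'a set set) \<Rightarrow> (nat \<Rightarrow> 'b set set) \<Rightarrow>
    (nat \<Rightarrow> 'a) \<Rightarrow> (nat \<Rightarrow> 'a) \<Rightarrow> (nat \<Rightarrow> 'b) \<Rightarrow> (nat \<Rightarrow> 'b) \<Rightarrow>
    ((nat \<times> 'a) + (nat \<times> 'b)) set set" where
  "cyc_E n EG EM a b x y =
     {{Inl (i, u), Inl (i, w)} | i u w. i < n \<and> {u, w} \<in> EG i} \<union>
     {{Inr (i, u), Inr (i, w)} | i u w. i < n \<and> {u, w} \<in> EM i} \<union>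
     {{Inl (i, b i), Inr (i, x i)} | i. i < n} \<union>
     {{Inr (i, y i), Inl (Suc i mod n, a (Suc i mod n))} | i. i < n}"

end

theory Submission
  imports Defs
begin


lemma is_path_single: "v \<in> V \<Longrightarrow> is_path V E [v]"
  by (simp add: is_path_def)

lemma is_path_append:
  assumes "is_path V E p" "is_path V E q" "set p \<inter> set q = {}" "{last p, hd q} \<in> E"
  shows "is_path V E (p @ q)"
proof -
  have pne: "p \<noteq> []" and qne: "q \<noteq> []" using assms(1,2) by (auto simp: is_path_def)
  have "\<forall>i. Suc i < length (p @ q) \<longrightarrow> {(p@q) ! i, (p@q) ! Suc i} \<in> E"
  proof (intro allI impI)
    fix i assume i: "Suc i < length (p @ q)"
    consider "Suc i < length p" | "Suc i = length p" | "Suc i > length p" by linarith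
    then show "{(p@q) ! i, (p@q) ! Suc i} \<in> E"
    proof cases
      case 1
      then have "{p ! i, p ! Suc i} \<in> E" using assms(1) unfolding is_path_def by blast
      then show ?thesis using 1 by (simp add: nth_append)
    next
      case 2
      then have "i = length p - 1" by simp
      then have "(p@q) ! i = last p" using pne by (simp add: nth_append last_conv_nth)
      moreover have "(p@q) ! Suc i = hd q" using 2 qne by (simp add: nth_append hd_conv_nth)
      ultimately show ?thesis using assms(4) by simp
    next
      case 3
      then have "(p@q) ! i = q ! (i - length p)" "(p@q) ! Suc i = q ! Suc (i - length p)"
        by (auto simp: nth_append Suc_diff_le)
      moreover have "Suc (i - length p) < length q" using 3 i by auto
      moreover have "{q ! (i - length p), q ! Suc (i - length p)} \<in> E"
        using assms(2) calculation(3) unfolding is_path_def by blast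
      ultimately show ?thesis by simp
    qed
  qed
  moreover have "distinct (p @ q)" using assms(1,2,3) by (simp add: is_path_def)
  moreover have "set (p @ q) \<subseteq> V" using assms(1,2) by (simp add: is_path_def)
  ultimately show ?thesis using pne unfolding is_path_def by simp
qed

lemma is_path_rev: assumes "is_path V E p" shows "is_path V E (rev p)"
proof -
  have h: "p \<noteq> []" "distinct p" "set p \<subseteq> V"
    "\<And>i. Suc i < length p \<Longrightarrow> {p ! i, p ! Suc i} \<in> E" using assms by (auto simp: is_path_def)
  have "{rev p ! i, rev p ! Suc i} \<in> E" if i: "Suc i < length p" for i
  proof -
    have 1: "Suc (length p - Suc (Suc i)) < length p" using i by linarith
    have 2: "Suc (length p - Suc (Suc i)) = length p - Suc i" using i by linarith
    have "{p ! (length p - Suc (Suc i)), p ! (length p - Suc i)} \<in> E" using h(4)[OF 1] unfolding 2 .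
    moreover have "rev p ! i = p ! (length p - Suc i)" using i by (simp add: rev_nth)
    moreover have "rev p ! Suc i = p ! (length p - Suc (Suc i))" using i by (simp add: rev_nth)
    ultimately show ?thesis by (simp add: insert_commute)
  qed
  then show ?thesis using h unfolding is_path_def by simp
qed

lemma is_path_drop: assumes "is_path V E p" "j < length p" shows "is_path V E (drop j p)"
proof -
  have "{drop j p ! i, drop j p ! Suc i} \<in> E" if "Suc i < length (drop j p)" for i
  proof -
    have "Suc (j + i) < length p" using that by simp
    then have "{p ! (j + i), p ! Suc (j + i)} \<in> E" using assms(1) unfolding is_path_def by blast
    then show ?thesis using that by simp
  qed
  moreover have "set (drop j p) \<subseteq> V" using assms(1) set_drop_subset unfolding is_path_def by fast
  ultimately show ?thesis using assms unfolding is_path_def by simp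
qed

lemma is_path_take: assumes "is_path V E p" "0 < j" shows "is_path V E (take j p)"
proof -
  have "{take j p ! i, take j p ! Suc i} \<in> E" if "Suc i < length (take j p)" for i
  proof -
    have "Suc i < length p" "Suc i < j" using that by auto
    then have "{p ! i, p ! Suc i} \<in> E" using assms(1) unfolding is_path_def by blast
    then show ?thesis using that by simp
  qed
  moreover have "set (take j p) \<subseteq> V" using assms(1) set_take_subset unfolding is_path_def by fast
  ultimately show ?thesis using assms unfolding is_path_def by simp
qed

lemma is_path_map:
  assumes "is_path V E p" "inj_on f V" "f ` V \<subseteq> V'" "\<And>u v. u \<in> V \<Longrightarrow> v \<in> V \<Longrightarrow> {u,v} \<in> E \<Longrightarrow> {f u, f v} \<in> E'"
  shows "is_path V' E' (map f p)"
proof -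
  have sp: "set p \<subseteq> V" using assms(1) by (simp add: is_path_def)
  have "inj_on f (set p)" using assms(2) sp by (meson inj_on_subset)
  then have "distinct (map f p)" using assms(1) by (simp add: distinct_map is_path_def)
  moreover have "{map f p ! i, map f p ! Suc i} \<in> E'" if "Suc i < length (map f p)" for i
  proof -
    have "{p ! i, p ! Suc i} \<in> E" using assms(1) that unfolding is_path_def by simp
    moreover have "p ! i \<in> V" "p ! Suc i \<in> V" using sp that by (auto intro!: subsetD[OF sp])
    ultimately show ?thesis using assms(4) that by simp
  qed
  moreover have "set (map f p) \<subseteq> V'" using sp assms(3) by auto
  ultimately show ?thesis using assms(1) unfolding is_path_def by simp
qed

lemma is_path_length: "is_path V E p \<Longrightarrow> finite V \<Longrightarrow> length p \<le> card V"
  unfolding is_path_def by (metis card_mono distinct_card)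

lemma reach_step:
  assumes "is_path V E p" "hd p = u" "last p = v" "{v,w} \<in> E" "w \<in> V"
  shows "\<exists>q. is_path V E q \<and> hd q = u \<and> last q = w"
proof (cases "w \<in> set p")
  case True
  then obtain j where j: "j < length p" "p ! j = w" by (meson in_set_conv_nth)
  have "is_path V E (take (Suc j) p)" using is_path_take assms(1) by blast
  moreover have "hd (take (Suc j) p) = u" using assms j by (auto simp: is_path_def)
  moreover have "last (take (Suc j) p) = w" using j by (simp add: take_Suc_conv_app_nth)
  ultimately show ?thesis by blast
next
  case False
  have "is_path V E (p @ [w])" using is_path_append[OF assms(1) is_path_single[OF assms(5)]] False assms(3,4) by auto
  moreover have "hd (p @ [w]) = u" using assms by (auto simp: is_path_def)
  ultimately show ?thesis by (intro exI[of _ "p @ [w]"]) auto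
qed

definition reach :: "'a set \<Rightarrow> 'a set set \<Rightarrow> 'a \<Rightarrow> 'a \<Rightarrow> bool" where
  "reach V E u v \<longleftrightarrow> (\<exists>p. is_path V E p \<and> hd p = u \<and> last p = v)"

lemma reach_path_prefix:
  assumes "is_path V E p" "w \<in> set p" shows "reach V E (hd p) w"
proof -
  obtain j where j: "j < length p" "p ! j = w" by (meson in_set_conv_nth assms(2))
  have "is_path V E (take (Suc j) p)" using is_path_take assms(1) by blast
  moreover have "hd (take (Suc j) p) = hd p" using assms j by (auto simp: is_path_def)
  moreover have "last (take (Suc j) p) = w" using j by (simp add: take_Suc_conv_app_nth)
  ultimately show ?thesis unfolding reach_def by blast
qed

lemma reach_sym: "reach V E u v \<Longrightarrow> reach V E v u"
  unfolding reach_def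
  by (metis is_path_rev hd_rev last_rev)

lemma reach_trans_aux:
  "is_path V E q \<Longrightarrow> reach V E u (hd q) \<Longrightarrow> reach V E u (last q)"
proof (induction q rule: rev_induct)
  case Nil then show ?case by (simp add: is_path_def)
next
  case (snoc w q)
  show ?case
  proof (cases "q = []")
    case True then show ?thesis using snoc by simp
  next
    case False
    have pq: "is_path V E q" using snoc.prems(1) False is_path_take[of V E "q @ [w]" "length q"] by auto
    have "reach V E u (last q)" using snoc.IH[OF pq] snoc.prems False by simp
    moreover have "{last q, w} \<in> E"
      using snoc.prems(1) False unfolding is_path_def
      by (metis (no_types, lifting) One_nat_def Suc_pred append_is_Nil_conv last_conv_nth length_append_singleton length_greater_0_conv lessI nth_append nth_append_length)
    moreover have "w \<in> V" using snoc.prems(1) by (auto simp: is_path_def)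
    ultimately have "reach V E u w" using reach_step[of V E _ u "last q" w] unfolding reach_def by blast
    then show ?thesis by simp
  qed
qed

lemma reach_trans: "reach V E u v \<Longrightarrow> reach V E v w \<Longrightarrow> reach V E u w"
  by (metis reach_trans_aux reach_def)

lemma reach_edge: "reach V E u v" if "{u,v} \<in> E" "u \<in> V" "v \<in> V" "u \<noteq> v"
proof -
  have "is_path V E [u,v]" unfolding is_path_def
  proof (intro conjI allI impI)
    fix i assume "Suc i < length [u,v]"
    then have "i = 0" by simp
    then show "{[u, v] ! i, [u, v] ! Suc i} \<in> E" using that by simp
  qed (use that in auto)
  then show ?thesis unfolding reach_def by force
qed



lemma is_path_mono_V: "is_path V E p \<Longrightarrow> set p \<subseteq> W \<Longrightarrow> is_path W E p"
  by (simp add: is_path_def)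

locale ringc =
  fixes n m :: nat and k :: "nat \<Rightarrow> nat"
    and VG :: "nat \<Rightarrow> 'a set" and EG :: "nat \<Rightarrow> 'a set set" and a b :: "nat \<Rightarrow> 'a"
    and VM :: "nat \<Rightarrow> 'b set" and EM :: "nat \<Rightarrow> 'b set set" and x y :: "nat \<Rightarrow> 'b"
  assumes n2: "n \<ge> 2" and m0: "m > 0"
    and mk: "\<And>i. i < n \<Longrightarrow> m + 2 \<le> k i"
    and infl: "\<And>i. i < n \<Longrightarrow> inflator (VG i) (EG i) (k i) m (a i) (b i)"
    and hc: "\<And>i. i < n \<Longrightarrow> hctv (VM i) (EM i) (x i) (y i)"
    and cardM: "\<And>i. i < n \<Longrightarrow> card (VM i) \<ge> m"
begin

abbreviation "V \<equiv> cyc_V n VG VM"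
abbreviation "E \<equiv> cyc_E n EG EM a b x y"

definition GB :: "nat \<Rightarrow> (nat \<times> 'a + nat \<times> 'b) set" where "GB j = (\<lambda>w. Inl (j, w)) ` VG j"
definition MB :: "nat \<Rightarrow> (nat \<times> 'a + nat \<times> 'b) set" where "MB j = (\<lambda>w. Inr (j, w)) ` VM j"

lemma inV_Inl[simp]: "Inl (j, w) \<in> V \<longleftrightarrow> j < n \<and> w \<in> VG j"
  by (auto simp: cyc_V_def)
lemma inV_Inr[simp]: "Inr (j, w) \<in> V \<longleftrightarrow> j < n \<and> w \<in> VM j"
  by (auto simp: cyc_V_def)
lemma in_GB[simp]: "Inl (i, w) \<in> GB j \<longleftrightarrow> i = j \<and> w \<in> VG j"
  by (auto simp: GB_def)
lemma in_GB_Inr[simp]: "Inr v \<notin> GB j"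
  by (auto simp: GB_def)
lemma in_MB[simp]: "Inr (i, w) \<in> MB j \<longleftrightarrow> i = j \<and> w \<in> VM j"
  by (auto simp: MB_def)
lemma in_MB_Inl[simp]: "Inl v \<notin> MB j"
  by (auto simp: MB_def)

lemma E_LL: "{Inl (i, u), Inl (j, w)} \<in> E \<Longrightarrow> i = j \<and> i < n \<and> {u, w} \<in> EG i"
  unfolding cyc_E_def by (elim UnE) (auto simp: doubleton_eq_iff insert_commute)
lemma E_RR: "{Inr (i, u), Inr (j, w)} \<in> E \<Longrightarrow> i = j \<and> i < n \<and> {u, w} \<in> EM i"
  unfolding cyc_E_def by (elim UnE) (auto simp: doubleton_eq_iff insert_commute)
lemma E_LR: "{Inl (i, u), Inr (j, w)} \<in> E \<Longrightarrow> i < n \<and> j < n \<and>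
   ((i = j \<and> u = b i \<and> w = x j) \<or> (i = Suc j mod n \<and> u = a i \<and> w = y j))"
  unfolding cyc_E_def by (elim UnE) (auto simp: doubleton_eq_iff)

lemma E_G: "i < n \<Longrightarrow> {u, w} \<in> EG i \<Longrightarrow> {Inl (i, u), Inl (i, w)} \<in> E"
  unfolding cyc_E_def by blast
lemma E_M: "i < n \<Longrightarrow> {u, w} \<in> EM i \<Longrightarrow> {Inr (i, u), Inr (i, w)} \<in> E"
  unfolding cyc_E_def by blast
lemma E_bx: "i < n \<Longrightarrow> {Inl (i, b i), Inr (i, x i)} \<in> E"
  unfolding cyc_E_def by blast
lemma E_ya: "i < n \<Longrightarrow> {Inr (i, y i), Inl (Suc i mod n, a (Suc i mod n))} \<in> E"
  unfolding cyc_E_def by blast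


lemma E_sym: "{u, v} \<in> E \<Longrightarrow> {v, u} \<in> E" by (simp add: insert_commute)

lemma infl': "i < n \<Longrightarrow> inflator (VG i) (EG i) (k i) m (a i) (b i)" using infl by blast

lemma G_graph: "i < n \<Longrightarrow> graph (VG i) (EG i)" using infl by (simp add: inflator_def)
lemma G_card: "i < n \<Longrightarrow> card (VG i) = k i" using infl by (simp add: inflator_def)
lemma G_fin: "i < n \<Longrightarrow> finite (VG i)" using G_graph by (simp add: graph_def)
lemma a_in: "i < n \<Longrightarrow> a i \<in> VG i" using infl by (simp add: inflator_def)
lemma b_in: "i < n \<Longrightarrow> b i \<in> VG i" using infl by (simp add: inflator_def)
lemma ab_ne: "i < n \<Longrightarrow> a i \<noteq> b i" using infl by (simp add: inflator_def)
lemma D1ex: "i < n \<Longrightarrow> \<exists>p. is_path (VG i) (EG i) p \<and> hd p = a i \<and> last p = b i \<and> length p = k i - m"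
  using infl by (simp add: inflator_def)
lemma D1le: "i < n \<Longrightarrow> is_path (VG i) (EG i) p \<Longrightarrow> hd p = a i \<Longrightarrow> last p = b i \<Longrightarrow> length p \<le> k i - m"
  using infl unfolding inflator_def by blast
lemma D2a: "i < n \<Longrightarrow> \<exists>p. is_path (VG i) (EG i) p \<and> hd p = a i \<and> set p = VG i - {b i}"
  using infl by (simp add: inflator_def)
lemma D2b: "i < n \<Longrightarrow> \<exists>p. is_path (VG i) (EG i) p \<and> hd p = b i \<and> set p = VG i - {a i}"
  using infl by (simp add: inflator_def)
lemma D3a: "i < n \<Longrightarrow> \<exists>p. is_path (VG i) (EG i) p \<and> hd p = a i \<and> set p = VG i"
  using infl by (simp add: inflator_def)
lemma D3b: "i < n \<Longrightarrow> \<exists>p. is_path (VG i) (EG i) p \<and> hd p = b i \<and> set p = VG i"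
  using infl by (simp add: inflator_def)
lemma D4: "i < n \<Longrightarrow> v \<in> VG i - {a i, b i} \<Longrightarrow> \<exists>P Q.
        is_path (VG i) (EG i) P \<and> is_path (VG i) (EG i) Q \<and> set P \<inter> set Q = {} \<and> set P \<union> set Q = VG i \<and>
        hd P = v \<and> ((last P = a i \<and> hd Q = b i) \<or> (last P = b i \<and> hd Q = a i))"
  using infl unfolding inflator_def by blast

lemma EG_sub: "i < n \<Longrightarrow> {u, w} \<in> EG i \<Longrightarrow> u \<in> VG i \<and> w \<in> VG i"
  using G_graph unfolding graph_def by blast

lemma M_graph: "i < n \<Longrightarrow> graph (VM i) (EM i)" using hc by (simp add: hctv_def)
lemma M_fin: "i < n \<Longrightarrow> finite (VM i)" using M_graph by (simp add: graph_def)
lemma x_in: "i < n \<Longrightarrow> x i \<in> VM i" using hc unfolding hctv_def by blast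
lemma y_in: "i < n \<Longrightarrow> y i \<in> VM i" using hc unfolding hctv_def by blast
lemma EM_sub: "i < n \<Longrightarrow> {u, w} \<in> EM i \<Longrightarrow> u \<in> VM i \<and> w \<in> VM i"
  using M_graph unfolding graph_def by blast

lemma path_card: "is_path V' E' p \<Longrightarrow> card (set p) = length p"
  by (simp add: is_path_def distinct_card)

lemma M_xy: assumes i: "i < n"
  shows "\<exists>q. is_path (VM i) (EM i) q \<and> set q = VM i \<and> hd q = x i \<and> last q = y i"
proof -
  have h: "graph (VM i) (EM i) \<and> ((VM i = {x i} \<and> y i = x i) \<or>
      (x i \<in> VM i \<and> y i \<in> VM i \<and> x i \<noteq> y i \<and>
       (\<forall>v\<in>VM i. \<exists>p. is_path (VM i) (EM i) p \<and> set p = VM i \<and> hd p = v \<and> (last p = x i \<or> last p = y i))))"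
    using hc[OF i] by (simp add: hctv_def)
  show ?thesis
  proof (cases "VM i = {x i} \<and> y i = x i")
    case True
    then have "is_path (VM i) (EM i) [x i]" by (simp add: is_path_def)
    then show ?thesis using True by force
  next
    case False
    then have h2: "x i \<in> VM i" "y i \<in> VM i" "x i \<noteq> y i"
      "\<forall>v\<in>VM i. \<exists>p. is_path (VM i) (EM i) p \<and> set p = VM i \<and> hd p = v \<and> (last p = x i \<or> last p = y i)"
      using h by auto
    then obtain p where p: "is_path (VM i) (EM i) p" "set p = VM i" "hd p = x i" "last p = x i \<or> last p = y i"
      by blast
    have "last p \<noteq> x i"
    proof
      assume "last p = x i"
      then have "hd p = last p" using p by simp
      moreover have "distinct p" "p \<noteq> []" using p(1) by (auto simp: is_path_def)
      ultimately have "length p = 1"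
        by (metis One_nat_def Suc_pred distinct_conv_nth hd_conv_nth last_conv_nth length_greater_0_conv
            lessI zero_less_diff diff_less less_numeral_extra(1) not_gr0)
      then have "set p = {hd p}" by (cases p) auto
      then show False using p h2 by auto
    qed
    then show ?thesis using p by blast
  qed
qed

lemma M_ham: assumes i: "i < n" and v: "v \<in> VM i"
  shows "\<exists>q. is_path (VM i) (EM i) q \<and> set q = VM i \<and> hd q = v \<and> (last q = x i \<or> last q = y i)"
proof -
  have h: "((VM i = {x i} \<and> y i = x i) \<or>
      (\<forall>v\<in>VM i. \<exists>p. is_path (VM i) (EM i) p \<and> set p = VM i \<and> hd p = v \<and> (last p = x i \<or> last p = y i)))"
    using hc[OF i] unfolding hctv_def by blast
  show ?thesis
  proof (cases "VM i = {x i} \<and> y i = x i")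
    case True
    then have "is_path (VM i) (EM i) [x i]" by (simp add: is_path_def)
    then show ?thesis using True v by force
  next
    case False
    then show ?thesis using h v by blast
  qed
qed

definition gl :: "nat \<Rightarrow> 'a \<Rightarrow> nat \<times> 'a + nat \<times> 'b" where "gl j w = Inl (j, w)"
definition mr :: "nat \<Rightarrow> 'b \<Rightarrow> nat \<times> 'a + nat \<times> 'b" where "mr j w = Inr (j, w)"

lemma gl_path: assumes "j < n" "is_path (VG j) (EG j) q" shows "is_path V E (map (gl j) q)"
  using assms(2) by (rule is_path_map) (auto simp: gl_def inj_on_def assms(1) intro: E_G)

lemma mr_path: assumes "j < n" "is_path (VM j) (EM j) q" shows "is_path V E (map (mr j) q)"
  using assms(2) by (rule is_path_map) (auto simp: mr_def inj_on_def assms(1) intro: E_M)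

lemma unlift_G: assumes "is_path V E q" "set q \<subseteq> GB j"
  shows "is_path (VG j) (EG j) (map (snd \<circ> projl) q)"
proof -
  have "is_path (GB j) E q" using assms is_path_mono_V by blast
  then show ?thesis
  proof (rule is_path_map)
    show "inj_on (snd \<circ> projl) (GB j)" by (auto simp: GB_def inj_on_def)
    show "(snd \<circ> projl) ` GB j \<subseteq> VG j" by (auto simp: GB_def)
    show "{(snd \<circ> projl) u, (snd \<circ> projl) v} \<in> EG j" if "u \<in> GB j" "v \<in> GB j" "{u, v} \<in> E" for u v
      using that E_LL by (auto simp: GB_def)
  qed
qed

end


definition cross :: "'v set \<Rightarrow> 'v list \<Rightarrow> nat set" where
  "cross W p = {t. Suc t < length p \<and> (p ! t \<in> W) \<noteq> (p ! Suc t \<in> W)}"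

definition ends :: "'v set \<Rightarrow> 'v list \<Rightarrow> nat" where
  "ends W p = (if hd p \<in> W then 1 else 0) + (if last p \<in> W then 1 else 0)"

lemma cross_fin: "finite (cross W p)"
  by (rule finite_subset[of _ "{..<length p}"]) (auto simp: cross_def)

lemma cross_Cons: assumes "p \<noteq> []"
  shows "cross W (v # p) = (if (v \<in> W) \<noteq> (hd p \<in> W) then insert 0 (Suc ` cross W p) else Suc ` cross W p)"
proof -
  have 1: "0 \<in> cross W (v # p) \<longleftrightarrow> (v \<in> W) \<noteq> (hd p \<in> W)"
    using assms by (simp add: cross_def hd_conv_nth)
  have 2: "Suc t \<in> cross W (v # p) \<longleftrightarrow> t \<in> cross W p" for t
    by (simp add: cross_def)
  show ?thesis
  proof (rule set_eqI)
    fix t show "t \<in> cross W (v # p) \<longleftrightarrow> t \<in> (if (v \<in> W) \<noteq> (hd p \<in> W) then insert 0 (Suc ` cross W p) else Suc ` cross W p)"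
      using 1 2 by (cases t) auto
  qed
qed

lemma cross_parity: "p \<noteq> [] \<Longrightarrow> even (card (cross W p) + ends W p)"
proof (induction p)
  case Nil then show ?case by simp
next
  case (Cons v p)
  show ?case
  proof (cases "p = []")
    case True
    then have "cross W [v] = {}" by (auto simp: cross_def)
    then show ?thesis using True by (simp add: ends_def)
  next
    case False
    have c: "card (Suc ` cross W p) = card (cross W p)" by (simp add: card_image)
    have "0 \<notin> Suc ` cross W p" by auto
    have f: "finite (Suc ` cross W p)" using cross_fin by blast
    have "card (cross W (v # p)) = card (cross W p) + (if (v \<in> W) \<noteq> (hd p \<in> W) then 1 else 0)"
    proof (cases "(v \<in> W) \<noteq> (hd p \<in> W)")
      case True
      then have "cross W (v # p) = insert 0 (Suc ` cross W p)" using cross_Cons[OF False] by simp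
      then show ?thesis using True c f \<open>0 \<notin> Suc ` cross W p\<close> by simp
    next
      case F: False
      then have "cross W (v # p) = Suc ` cross W p" using cross_Cons[OF False] by simp
      then show ?thesis using F c by simp
    qed
    moreover have "ends W (v # p) = (if v \<in> W then 1 else 0) + (if last p \<in> W then 1 else 0)"
      using False by (simp add: ends_def)
    moreover have "even (card (cross W p) + (if hd p \<in> W then 1 else 0) + (if last p \<in> W then 1 else 0))"
      using Cons.IH[OF False] by (simp add: ends_def add.assoc)
    ultimately show ?thesis unfolding ends_def
      by (cases "v \<in> W"; cases "hd p \<in> W"; cases "last p \<in> W") auto
  qed
qed

lemma cross_const:
  assumes "\<And>t. i \<le> t \<Longrightarrow> t < j \<Longrightarrow> t \<notin> cross W p" "j < length p" "i \<le> j"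
  shows "(p ! i \<in> W) \<longleftrightarrow> (p ! j \<in> W)"
  using assms
proof (induction j)
  case 0 then show ?case by simp
next
  case (Suc j)
  show ?case
  proof (cases "i = Suc j")
    case True then show ?thesis by simp
  next
    case False
    then have "i \<le> j" using Suc by simp
    then have "(p ! i \<in> W) \<longleftrightarrow> (p ! j \<in> W)" using Suc by simp
    moreover have "j \<notin> cross W p" using Suc.prems \<open>i \<le> j\<close> by simp
    ultimately show ?thesis using Suc.prems(2) by (auto simp: cross_def)
  qed
qed

lemma edge_inj:
  assumes "distinct p"
  shows "inj_on (\<lambda>t. {p ! t, p ! Suc t}) {t. Suc t < length p}"
proof (rule inj_onI)
  fix s t assume s: "s \<in> {t. Suc t < length p}" and t: "t \<in> {t. Suc t < length p}"
    and e: "{p ! s, p ! Suc s} = {p ! t, p ! Suc t}"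
  have ne: "\<And>i j. i < length p \<Longrightarrow> j < length p \<Longrightarrow> p ! i = p ! j \<Longrightarrow> i = j"
    using assms nth_eq_iff_index_eq by blast
  from e consider "p ! s = p ! t" "p ! Suc s = p ! Suc t" | "p ! s = p ! Suc t" "p ! Suc s = p ! t"
    unfolding doubleton_eq_iff by blast
  then show "s = t"
  proof cases
    case 1 then show ?thesis using ne s t by auto
  next
    case 2
    then have "s = Suc t" "Suc s = t" using ne s t by auto
    then show ?thesis by simp
  qed
qed

context ringc begin

definition pr :: "nat \<Rightarrow> nat" where "pr j = (if j = 0 then n - 1 else j - 1)"

lemma pr_lt: "j < n \<Longrightarrow> pr j < n" using n2 by (auto simp: pr_def)

lemma pr_iff: assumes "j < n" "i < n" shows "Suc i mod n = j \<longleftrightarrow> i = pr j"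
proof (cases "Suc i = n")
  case True
  then show ?thesis using assms by (auto simp: pr_def)
next
  case False
  then have "Suc i < n" using assms by simp
  then show ?thesis using assms by (auto simp: pr_def)
qed

lemma Suc_pr: "j < n \<Longrightarrow> Suc (pr j) mod n = j" using pr_iff pr_lt by blast

lemma bdG:
  assumes "j < n" "w \<in> GB j" "z \<notin> GB j" "{w, z} \<in> E"
  shows "(w = Inl (j, a j) \<and> z = Inr (pr j, y (pr j))) \<or> (w = Inl (j, b j) \<and> z = Inr (j, x j))"
proof -
  obtain w' where w: "w = Inl (j, w')" "w' \<in> VG j" using assms(2) by (auto simp: GB_def)
  show ?thesis
  proof (cases z)
    case (Inl z0)
    then obtain i z' where z: "z = Inl (i, z')" by (cases z0) auto
    then have "i = j" "{w', z'} \<in> EG j" using E_LL assms(4) w by blast+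
    then have "z' \<in> VG j" using EG_sub assms(1) by blast
    then show ?thesis using assms(3) z \<open>i = j\<close> by simp
  next
    case (Inr z0)
    then obtain i z' where z: "z = Inr (i, z')" by (cases z0) auto
    then have "i < n \<and> ((j = i \<and> w' = b j \<and> z' = x i) \<or> (j = Suc i mod n \<and> w' = a j \<and> z' = y i))"
      using E_LR assms(4) w by blast
    then have i: "i < n" and d: "(j = i \<and> w' = b j \<and> z' = x i) \<or> (j = Suc i mod n \<and> w' = a j \<and> z' = y i)"
      by blast+
    from d show ?thesis
    proof
      assume "j = i \<and> w' = b j \<and> z' = x i" then show ?thesis using w z by simp
    next
      assume h: "j = Suc i mod n \<and> w' = a j \<and> z' = y i"
      then have "i = pr j" using pr_iff[OF assms(1) i] by blast
      then show ?thesis using w z h by simp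
    qed
  qed
qed

lemma bdM:
  assumes "j < n" "w \<in> MB j" "z \<notin> MB j" "{w, z} \<in> E"
  shows "(w = Inr (j, x j) \<and> z = Inl (j, b j)) \<or> (w = Inr (j, y j) \<and> z = Inl (Suc j mod n, a (Suc j mod n)))"
proof -
  obtain w' where w: "w = Inr (j, w')" "w' \<in> VM j" using assms(2) by (auto simp: MB_def)
  show ?thesis
  proof (cases z)
    case (Inr z0)
    then obtain i z' where z: "z = Inr (i, z')" by (cases z0) auto
    then have "i = j" "{w', z'} \<in> EM j" using E_RR[of j w' i z'] assms(4) w by auto
    then have "z' \<in> VM j" using EM_sub assms(1) by blast
    then show ?thesis using assms(3) z \<open>i = j\<close> by simp
  next
    case (Inl z0)
    then obtain i z' where z: "z = Inl (i, z')" by (cases z0) auto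
    then have "{Inl (i, z'), Inr (j, w')} \<in> E" using assms(4) w by (simp add: insert_commute)
    then have "i < n \<and> ((i = j \<and> z' = b i \<and> w' = x j) \<or> (i = Suc j mod n \<and> z' = a i \<and> w' = y j))"
      using E_LR by blast
    then show ?thesis using w z by auto
  qed
qed

end


lemma par2: "\<not> (c::nat) \<le> e \<Longrightarrow> c \<le> 2 \<Longrightarrow> even (c + e) \<Longrightarrow> c = 2 \<and> e = 0"
  by presburger
lemma par0: "\<not> 2 \<le> (c::nat) + e \<Longrightarrow> even (c + e) \<Longrightarrow> c = 0 \<and> e = 0"
  by presburger

lemma untouched:
  assumes "p \<noteq> []" "cross W p = {}" "hd p \<notin> W"
  shows "set p \<inter> W = {}"
proof -
  have "p ! t \<notin> W" if "t < length p" for t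
    using cross_const[of 0 t W p] assms that by (simp add: hd_conv_nth)
  then show ?thesis by (auto simp: in_set_conv_nth)
qed

context ringc begin

lemma card_GB: "j < n \<Longrightarrow> card (GB j) = k j"
  unfolding GB_def by (subst card_image) (auto simp: inj_on_def G_card)
lemma card_MB: "j < n \<Longrightarrow> card (MB j) = card (VM j)"
  unfolding MB_def by (subst card_image) (auto simp: inj_on_def)
lemma fin_GB: "j < n \<Longrightarrow> finite (GB j)"
  unfolding GB_def using G_fin by blast
lemma fin_MB: "j < n \<Longrightarrow> finite (MB j)"
  unfolding MB_def using M_fin by blast

lemma cross_le2_G:
  assumes p: "is_path V E p" and j: "j < n"
  shows "card (cross (GB j) p) \<le> 2"
proof -
  let ?W = "GB j"
  let ?f = "\<lambda>t. {p ! t, p ! Suc t}"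
  have dp: "distinct p" and ed: "\<And>i. Suc i < length p \<Longrightarrow> {p!i, p!Suc i} \<in> E"
    using p by (auto simp: is_path_def)
  have inj: "inj_on ?f (cross ?W p)"
    by (rule inj_on_subset[OF edge_inj[OF dp]]) (auto simp: cross_def)
  let ?e1 = "{Inl (j, a j), Inr (pr j, y (pr j))}" and ?e2 = "{Inl (j, b j), Inr (j, x j)}"
  have sub: "?f ` cross ?W p \<subseteq> {?e1, ?e2}"
  proof
    fix e assume "e \<in> ?f ` cross ?W p"
    then obtain t where t: "t \<in> cross ?W p" "e = ?f t" by blast
    then have tl: "Suc t < length p" and d: "(p ! t \<in> ?W) \<noteq> (p ! Suc t \<in> ?W)" by (auto simp: cross_def)
    have E1: "{p!t, p!Suc t} \<in> E" using ed tl by blast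
    show "e \<in> {?e1, ?e2}"
    proof (cases "p ! t \<in> ?W")
      case True
      then have "p ! Suc t \<notin> ?W" using d by simp
      then show ?thesis using bdG[OF j True _ E1] t(2) by auto
    next
      case False
      then have "p ! Suc t \<in> ?W" using d by simp
      moreover have "{p!Suc t, p!t} \<in> E" using E1 by (simp add: insert_commute)
      ultimately have "(p!Suc t = Inl (j, a j) \<and> p!t = Inr (pr j, y (pr j))) \<or> (p!Suc t = Inl (j, b j) \<and> p!t = Inr (j, x j))"
        using bdG[OF j _ False] by blast
      then show ?thesis using t(2) by (auto simp: insert_commute)
    qed
  qed
  have "card (cross ?W p) = card (?f ` cross ?W p)" using inj by (simp add: card_image)
  also have "\<dots> \<le> card {?e1, ?e2}" by (rule card_mono[OF _ sub]) simp
  also have "\<dots> \<le> 2" by (cases "?e1 = ?e2") auto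
  finally show ?thesis .
qed

lemma cross_le2_M:
  assumes p: "is_path V E p" and j: "j < n"
  shows "card (cross (MB j) p) \<le> 2"
proof -
  let ?W = "MB j"
  let ?f = "\<lambda>t. {p ! t, p ! Suc t}"
  have dp: "distinct p" and ed: "\<And>i. Suc i < length p \<Longrightarrow> {p!i, p!Suc i} \<in> E"
    using p by (auto simp: is_path_def)
  have inj: "inj_on ?f (cross ?W p)"
    by (rule inj_on_subset[OF edge_inj[OF dp]]) (auto simp: cross_def)
  let ?e1 = "{Inr (j, x j), Inl (j, b j)}" and ?e2 = "{Inr (j, y j), Inl (Suc j mod n, a (Suc j mod n))}"
  have sub: "?f ` cross ?W p \<subseteq> {?e1, ?e2}"
  proof
    fix e assume "e \<in> ?f ` cross ?W p"
    then obtain t where t: "t \<in> cross ?W p" "e = ?f t" by blast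
    then have tl: "Suc t < length p" and d: "(p ! t \<in> ?W) \<noteq> (p ! Suc t \<in> ?W)" by (auto simp: cross_def)
    have E1: "{p!t, p!Suc t} \<in> E" using ed tl by blast
    show "e \<in> {?e1, ?e2}"
    proof (cases "p ! t \<in> ?W")
      case True
      then have "p ! Suc t \<notin> ?W" using d by simp
      then show ?thesis using bdM[OF j True _ E1] t(2) by auto
    next
      case False
      then have "p ! Suc t \<in> ?W" using d by simp
      moreover have "{p!Suc t, p!t} \<in> E" using E1 by (simp add: insert_commute)
      ultimately have "(p!Suc t = Inr (j, x j) \<and> p!t = Inl (j, b j)) \<or> (p!Suc t = Inr (j, y j) \<and> p!t = Inl (Suc j mod n, a (Suc j mod n)))"
        using bdM[OF j _ False] by blast
      then show ?thesis using t(2) by (auto simp: insert_commute)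
    qed
  qed
  have "card (cross ?W p) = card (?f ` cross ?W p)" using inj by (simp add: card_image)
  also have "\<dots> \<le> card {?e1, ?e2}" by (rule card_mono[OF _ sub]) simp
  also have "\<dots> \<le> 2" by (cases "?e1 = ?e2") auto
  finally show ?thesis .
qed

lemma pass_G:
  assumes p: "is_path V E p" and j: "j < n" and c: "card (cross (GB j) p) = 2"
    and h: "hd p \<notin> GB j" and l: "last p \<notin> GB j"
  shows "card (set p \<inter> GB j) \<le> k j - m"
proof -
  let ?W = "GB j"
  have pne: "p \<noteq> []" and dp: "distinct p" and ed: "\<And>i. Suc i < length p \<Longrightarrow> {p!i, p!Suc i} \<in> E"
    using p by (auto simp: is_path_def)
  obtain u v where uv: "cross ?W p = {u, v}" "u \<noteq> v" using c card_2_iff by metis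
  obtain t1 t2 where cr: "cross ?W p = {t1, t2}" and lt: "t1 < t2"
  proof (cases "u < v")
    case True then show ?thesis using that uv by blast
  next
    case False then have "v < u" using uv by simp
    then show ?thesis using that uv by (metis insert_commute)
  qed
  have t1c: "t1 \<in> cross ?W p" and t2c: "t2 \<in> cross ?W p" using cr by auto
  have t2l: "Suc t2 < length p" using t2c by (simp add: cross_def)
  have c1: "(p!t1 \<in> ?W) \<noteq> (p!Suc t1 \<in> ?W)" using t1c by (simp add: cross_def)
  have c2: "(p!t2 \<in> ?W) \<noteq> (p!Suc t2 \<in> ?W)" using t2c by (simp add: cross_def)
  have f0: "p!0 \<notin> ?W" using h pne by (simp add: hd_conv_nth)
  have A: "p!t \<notin> ?W" if "t \<le> t1" for t
  proof -
    have "(p ! 0 \<in> ?W) \<longleftrightarrow> (p ! t \<in> ?W)"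
      by (rule cross_const) (use that lt t2l cr in auto)
    then show ?thesis using f0 by simp
  qed
  have s1: "p!Suc t1 \<in> ?W" using c1 A[of t1] by simp
  have B: "p!t \<in> ?W" if "Suc t1 \<le> t" "t \<le> t2" for t
  proof -
    have "(p ! Suc t1 \<in> ?W) \<longleftrightarrow> (p ! t \<in> ?W)"
      by (rule cross_const) (use that lt t2l cr in auto)
    then show ?thesis using s1 by simp
  qed
  have s2: "p!Suc t2 \<notin> ?W" using c2 B[of t2] lt by simp
  have Cc: "p!t \<notin> ?W" if "Suc t2 \<le> t" "t < length p" for t
  proof -
    have "(p ! Suc t2 \<in> ?W) \<longleftrightarrow> (p ! t \<in> ?W)"
      by (rule cross_const) (use that lt t2l cr in auto)
    then show ?thesis using s2 by simp
  qed
  define q where "q = take (t2 - t1) (drop (Suc t1) p)"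
  have lq: "length q = t2 - t1" using t2l lt by (simp add: q_def)
  have qn: "q ! i = p ! (Suc t1 + i)" if "i < length q" for i
    using that lq t2l by (simp add: q_def)
  have qp: "is_path V E q" unfolding q_def
    by (rule is_path_take[OF is_path_drop[OF p]]) (use lt t2l in auto)
  have qne: "q \<noteq> []" using lq lt by auto
  have qW: "set q \<subseteq> ?W"
  proof
    fix z assume "z \<in> set q"
    then obtain i where i: "i < length q" "z = q ! i" by (auto simp: in_set_conv_nth)
    then show "z \<in> ?W" using qn[OF i(1)] B[of "Suc t1 + i"] lq by simp
  qed
  have Wq: "set p \<inter> ?W \<subseteq> set q"
  proof
    fix z assume z: "z \<in> set p \<inter> ?W"
    then obtain t where t: "t < length p" "z = p ! t" by (auto simp: in_set_conv_nth)
    have "t1 < t" using A[of t] z t by (cases "t \<le> t1") auto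
    moreover have "t \<le> t2" using Cc[of t] z t by (cases "t \<le> t2") auto
    ultimately have "t - Suc t1 < length q" "q ! (t - Suc t1) = z" using qn lq t by auto
    then show "z \<in> set q" by (metis nth_mem)
  qed
  have hq: "hd q = p ! Suc t1" using qne qn[of 0] by (simp add: hd_conv_nth)
  have lastq: "last q = p ! t2"
  proof -
    have "last q = q ! (t2 - t1 - 1)" using qne lq by (simp add: last_conv_nth)
    also have "\<dots> = p ! (Suc t1 + (t2 - t1 - 1))" using qn lq lt by simp
    also have "Suc t1 + (t2 - t1 - 1) = t2" using lt by simp
    finally show ?thesis .
  qed
  have e1: "{p ! Suc t1, p ! t1} \<in> E" using ed[of t1] lt t2l by (simp add: insert_commute)
  have e2: "{p ! t2, p ! Suc t2} \<in> E" using ed[of t2] t2l by simp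
  have b1: "(p!Suc t1 = Inl (j, a j) \<and> p!t1 = Inr (pr j, y (pr j))) \<or> (p!Suc t1 = Inl (j, b j) \<and> p!t1 = Inr (j, x j))"
    using bdG[OF j s1 A[of t1] e1] by simp
  have b2: "(p!t2 = Inl (j, a j) \<and> p!Suc t2 = Inr (pr j, y (pr j))) \<or> (p!t2 = Inl (j, b j) \<and> p!Suc t2 = Inr (j, x j))"
    using bdG[OF j B[of t2] s2 e2] lt by simp
  have abn: "a j \<noteq> b j" using ab_ne j by blast
  have ne: "p ! Suc t1 \<noteq> p ! t2"
  proof
    assume eq: "p ! Suc t1 = p ! t2"
    then have "p ! t1 = p ! Suc t2" using b1 b2 abn by auto
    then have "t1 = Suc t2" using dp t2l lt nth_eq_iff_index_eq by (metis Suc_lessD less_trans)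
    then show False using lt by simp
  qed
  have ends: "(hd q = Inl (j, a j) \<and> last q = Inl (j, b j)) \<or> (hd q = Inl (j, b j) \<and> last q = Inl (j, a j))"
    using b1 b2 ne hq lastq by auto
  define q' where "q' = map (snd \<circ> projl) q"
  have q'p: "is_path (VG j) (EG j) q'" unfolding q'_def by (rule unlift_G[OF qp qW])
  have hq': "hd q' = snd (projl (hd q))" and lq': "last q' = snd (projl (last q))"
    using qne by (auto simp: q'_def hd_map last_map)
  have "length q' \<le> k j - m"
  proof (cases "hd q = Inl (j, a j)")
    case True
    then have "hd q' = a j" "last q' = b j" using ends hq' lq' by auto
    then show ?thesis using D1le[OF j q'p] by blast
  next
    case False
    then have "hd q' = b j" "last q' = a j" using ends hq' lq' by auto
    then have "hd (rev q') = a j" "last (rev q') = b j" by (simp_all add: hd_rev last_rev)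
    then show ?thesis using D1le[OF j is_path_rev[OF q'p]] by simp
  qed
  moreover have "card (set p \<inter> ?W) \<le> card (set q)" by (rule card_mono[OF _ Wq]) simp
  moreover have "card (set q) = length q'" using path_card[OF qp] by (simp add: q'_def)
  ultimately show ?thesis by simp
qed

lemma ineq_G:
  assumes p: "is_path V E p" and j: "j < n"
  shows "int m * (int (card (cross (GB j) p)) - int (ends (GB j) p)) \<le> 2 * (int (k j) - int (card (set p \<inter> GB j)))"
proof -
  have le: "card (set p \<inter> GB j) \<le> k j"
    using card_mono[OF fin_GB[OF j], of "set p \<inter> GB j"] card_GB[OF j] by auto
  have pne: "p \<noteq> []" using p by (simp add: is_path_def)
  show ?thesis
  proof (cases "card (cross (GB j) p) \<le> ends (GB j) p")
    case True
    then have "int (card (cross (GB j) p)) - int (ends (GB j) p) \<le> 0" by simp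
    then have "int m * (int (card (cross (GB j) p)) - int (ends (GB j) p)) \<le> 0"
      by (simp add: mult_nonneg_nonpos)
    moreover have "int (card (set p \<inter> GB j)) \<le> int (k j)" using le by (rule of_nat_mono)
    ultimately show ?thesis by arith
  next
    case False
    have c2: "card (cross (GB j) p) \<le> 2" using cross_le2_G[OF p j] .
    have ev: "even (card (cross (GB j) p) + ends (GB j) p)" using cross_parity[OF pne] .
    have "card (cross (GB j) p) = 2 \<and> ends (GB j) p = 0" using par2[OF False c2 ev] .
    then have c: "card (cross (GB j) p) = 2" and e: "hd p \<notin> GB j" "last p \<notin> GB j"
      by (auto simp: ends_def split: if_splits)
    have "card (set p \<inter> GB j) \<le> k j - m" using pass_G[OF p j c e] .
    moreover have "m \<le> k j" using mk[OF j] by simp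
    ultimately show ?thesis using c e by (simp add: ends_def)
  qed
qed

lemma ineq_M:
  assumes p: "is_path V E p" and j: "j < n"
  shows "int m * (2 - int (card (cross (MB j) p)) - int (ends (MB j) p)) \<le> 2 * (int (card (VM j)) - int (card (set p \<inter> MB j)))"
proof -
  have le: "card (set p \<inter> MB j) \<le> card (VM j)"
    using card_mono[OF fin_MB[OF j], of "set p \<inter> MB j"] card_MB[OF j] by auto
  have pne: "p \<noteq> []" using p by (simp add: is_path_def)
  show ?thesis
  proof (cases "2 \<le> card (cross (MB j) p) + ends (MB j) p")
    case True
    then have "2 - int (card (cross (MB j) p)) - int (ends (MB j) p) \<le> 0" by simp
    then have "int m * (2 - int (card (cross (MB j) p)) - int (ends (MB j) p)) \<le> 0"
      by (simp add: mult_nonneg_nonpos)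
    moreover have "int (card (set p \<inter> MB j)) \<le> int (card (VM j))" using le by (rule of_nat_mono)
    ultimately show ?thesis by arith
  next
    case False
    have ev: "even (card (cross (MB j) p) + ends (MB j) p)" using cross_parity[OF pne] .
    have "card (cross (MB j) p) = 0 \<and> ends (MB j) p = 0" using par0[OF False ev] .
    then have c0: "card (cross (MB j) p) = 0" and e: "hd p \<notin> MB j" and e0: "ends (MB j) p = 0"
      by (auto simp: ends_def split: if_splits)
    have c: "cross (MB j) p = {}" using c0 cross_fin[of "MB j" p] by simp
    have "set p \<inter> MB j = {}" using untouched[OF pne c e] .
    then show ?thesis using cardM[OF j] e0 c by simp
  qed
qed

end


lemma key_arith: fixes m A B C D N :: int assumes "A = C" "B + D = 2"
  shows "m * (A - B) + m * (2 * N - C - D) = m * (2 * N - 2)"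
proof -
  have "(A - B) + (2 * N - C - D) = 2 * N - 2" using assms by arith
  then show ?thesis by (metis distrib_left)
qed
lemma fin_arith: fixes K SG VMs SM len n m T :: nat
  assumes "int m * (2 * int n - 2) \<le> 2 * (int K - int SG) + 2 * (int VMs - int SM)" "len = SG + SM" "T = K + VMs" "n \<ge> 2"
  shows "len + (n-1)*m \<le> T"
proof -
  have "int m * (2 * int n - 2) = 2 * int ((n - 1) * m)" using assms(4) by (simp add: of_nat_diff algebra_simps)
  then show ?thesis using assms(1-3) by arith
qed
context ringc begin

lemma V_eq: "V = (\<Union>j<n. GB j) \<union> (\<Union>j<n. MB j)"
  by (auto simp: cyc_V_def GB_def MB_def)

lemma isl_GB: "v \<in> GB j \<Longrightarrow> isl v" by (auto simp: GB_def)
lemma isl_MB: "v \<in> MB j \<Longrightarrow> \<not> isl v" by (auto simp: MB_def)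
lemma GB_disj: "v \<in> GB i \<Longrightarrow> v \<in> GB j \<Longrightarrow> i = j" by (auto simp: GB_def)
lemma MB_disj: "v \<in> MB i \<Longrightarrow> v \<in> MB j \<Longrightarrow> i = j" by (auto simp: MB_def)

lemma card_part:
  assumes "S \<subseteq> V"
  shows "card S = (\<Sum>j<n. card (S \<inter> GB j)) + (\<Sum>j<n. card (S \<inter> MB j))"
proof -
  have "S \<subseteq> (\<Union>j<n. GB j) \<union> (\<Union>j<n. MB j)" using assms V_eq by simp
  then have S: "S = (\<Union>j<n. S \<inter> GB j) \<union> (\<Union>j<n. S \<inter> MB j)" by blast
  have fg: "\<And>j. j \<in> {..<n} \<Longrightarrow> finite (S \<inter> GB j)" using fin_GB by simp
  have fm: "\<And>j. j \<in> {..<n} \<Longrightarrow> finite (S \<inter> MB j)" using fin_MB by simp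
  have f1: "finite (\<Union>j<n. S \<inter> GB j)" by (rule finite_UN_I) (simp_all add: fg)
  have f2: "finite (\<Union>j<n. S \<inter> MB j)" by (rule finite_UN_I) (simp_all add: fm)
  have d: "(\<Union>j<n. S \<inter> GB j) \<inter> (\<Union>j<n. S \<inter> MB j) = {}" using isl_GB isl_MB by blast
  have "card S = card (\<Union>j<n. S \<inter> GB j) + card (\<Union>j<n. S \<inter> MB j)"
    by (subst S, rule card_Un_disjoint[OF f1 f2 d])
  also have "card (\<Union>j<n. S \<inter> GB j) = (\<Sum>j<n. card (S \<inter> GB j))"
  proof (rule card_UN_disjoint)
    show "\<forall>i\<in>{..<n}. \<forall>j\<in>{..<n}. i \<noteq> j \<longrightarrow> S \<inter> GB i \<inter> (S \<inter> GB j) = {}"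
      using GB_disj by blast
  qed (simp_all add: fg)
  also have "card (\<Union>j<n. S \<inter> MB j) = (\<Sum>j<n. card (S \<inter> MB j))"
  proof (rule card_UN_disjoint)
    show "\<forall>i\<in>{..<n}. \<forall>j\<in>{..<n}. i \<noteq> j \<longrightarrow> S \<inter> MB i \<inter> (S \<inter> MB j) = {}"
      using MB_disj by blast
  qed (simp_all add: fm)
  finally show ?thesis .
qed

definition Xc :: "(nat \<times> 'a + nat \<times> 'b) list \<Rightarrow> nat set" where
  "Xc p = {t. Suc t < length p \<and> isl (p ! t) \<noteq> isl (p ! Suc t)}"

lemma inV_GB: "v \<in> V \<Longrightarrow> isl v \<Longrightarrow> \<exists>j<n. v \<in> GB j"
  using V_eq isl_MB by blast
lemma inV_MB: "v \<in> V \<Longrightarrow> \<not> isl v \<Longrightarrow> \<exists>j<n. v \<in> MB j"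
  using V_eq isl_GB by blast

lemma sum_cross_G:
  assumes p: "is_path V E p"
  shows "(\<Sum>j<n. card (cross (GB j) p)) = card (Xc p)"
proof -
  have sp: "set p \<subseteq> V" and ed: "\<And>i. Suc i < length p \<Longrightarrow> {p!i, p!Suc i} \<in> E"
    using p by (auto simp: is_path_def)
  have U: "(\<Union>j<n. cross (GB j) p) = Xc p"
  proof (rule set_eqI, rule iffI)
    fix t assume "t \<in> (\<Union>j<n. cross (GB j) p)"
    then obtain j where j: "j < n" "t \<in> cross (GB j) p" by blast
    then have tl: "Suc t < length p" and d: "(p ! t \<in> GB j) \<noteq> (p ! Suc t \<in> GB j)" by (auto simp: cross_def)
    have e: "{p!t, p!Suc t} \<in> E" using ed tl by blast
    show "t \<in> Xc p"
    proof (cases "p ! t \<in> GB j")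
      case True
      then have "p ! Suc t \<notin> GB j" using d by simp
      then have "\<not> isl (p ! Suc t)" using bdG[OF j(1) True _ e] by auto
      then show ?thesis using True isl_GB tl by (auto simp: Xc_def)
    next
      case False
      then have T: "p ! Suc t \<in> GB j" using d by simp
      have e': "{p!Suc t, p!t} \<in> E" using e by (simp add: insert_commute)
      have "\<not> isl (p ! t)" using bdG[OF j(1) T False e'] by auto
      then show ?thesis using T isl_GB tl by (auto simp: Xc_def)
    qed
  next
    fix t assume t: "t \<in> Xc p"
    then have tl: "Suc t < length p" and d: "isl (p ! t) \<noteq> isl (p ! Suc t)" by (auto simp: Xc_def)
    have V1: "p ! t \<in> V" "p ! Suc t \<in> V" using sp tl by (auto intro!: subsetD[OF sp])
    show "t \<in> (\<Union>j<n. cross (GB j) p)"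
    proof (cases "isl (p ! t)")
      case True
      then obtain j where "j < n" "p ! t \<in> GB j" using inV_GB V1 by blast
      moreover have "p ! Suc t \<notin> GB j" using d True isl_GB by blast
      ultimately show ?thesis using tl by (auto simp: cross_def)
    next
      case False
      then obtain j where "j < n" "p ! Suc t \<in> GB j" using inV_GB V1 d by blast
      moreover have "p ! t \<notin> GB j" using False isl_GB by blast
      ultimately show ?thesis using tl by (auto simp: cross_def)
    qed
  qed
  have "card (\<Union>j<n. cross (GB j) p) = (\<Sum>j<n. card (cross (GB j) p))"
  proof (rule card_UN_disjoint)
    show "\<forall>i\<in>{..<n}. \<forall>j\<in>{..<n}. i \<noteq> j \<longrightarrow> cross (GB i) p \<inter> cross (GB j) p = {}"
    proof (intro ballI impI)
      fix i j assume ij: "i \<in> {..<n}" "j \<in> {..<n}" "i \<noteq> j"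
      show "cross (GB i) p \<inter> cross (GB j) p = {}"
      proof (rule ccontr)
        assume "cross (GB i) p \<inter> cross (GB j) p \<noteq> {}"
        then obtain t where t: "t \<in> cross (GB i) p" "t \<in> cross (GB j) p" by blast
        then have "t \<in> Xc p" using U ij by blast
        then have d: "isl (p ! t) \<noteq> isl (p ! Suc t)" by (simp add: Xc_def)
        from t have d1: "(p ! t \<in> GB i) \<noteq> (p ! Suc t \<in> GB i)" and d2: "(p ! t \<in> GB j) \<noteq> (p ! Suc t \<in> GB j)"
          by (auto simp: cross_def)
        show False
        proof (cases "isl (p ! t)")
          case True
          then have "p ! t \<in> GB i" "p ! t \<in> GB j" using d d1 d2 isl_GB by blast+
          then show False using GB_disj ij by blast
        next
          case False
          then have "p ! Suc t \<in> GB i" "p ! Suc t \<in> GB j" using d1 d2 isl_GB by blast+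
          then show False using GB_disj ij by blast
        qed
      qed
    qed
  qed (auto simp: cross_fin)
  then show ?thesis using U by simp
qed

lemma sum_cross_M:
  assumes p: "is_path V E p"
  shows "(\<Sum>j<n. card (cross (MB j) p)) = card (Xc p)"
proof -
  have sp: "set p \<subseteq> V" and ed: "\<And>i. Suc i < length p \<Longrightarrow> {p!i, p!Suc i} \<in> E"
    using p by (auto simp: is_path_def)
  have U: "(\<Union>j<n. cross (MB j) p) = Xc p"
  proof (rule set_eqI, rule iffI)
    fix t assume "t \<in> (\<Union>j<n. cross (MB j) p)"
    then obtain j where j: "j < n" "t \<in> cross (MB j) p" by blast
    then have tl: "Suc t < length p" and d: "(p ! t \<in> MB j) \<noteq> (p ! Suc t \<in> MB j)" by (auto simp: cross_def)
    have e: "{p!t, p!Suc t} \<in> E" using ed tl by blast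
    show "t \<in> Xc p"
    proof (cases "p ! t \<in> MB j")
      case True
      then have "p ! Suc t \<notin> MB j" using d by simp
      then have "isl (p ! Suc t)" using bdM[OF j(1) True _ e] by auto
      then show ?thesis using True isl_MB tl by (auto simp: Xc_def)
    next
      case False
      then have T: "p ! Suc t \<in> MB j" using d by simp
      have e': "{p!Suc t, p!t} \<in> E" using e by (simp add: insert_commute)
      have "isl (p ! t)" using bdM[OF j(1) T False e'] by auto
      then show ?thesis using T isl_MB tl by (auto simp: Xc_def)
    qed
  next
    fix t assume t: "t \<in> Xc p"
    then have tl: "Suc t < length p" and d: "isl (p ! t) \<noteq> isl (p ! Suc t)" by (auto simp: Xc_def)
    have V1: "p ! t \<in> V" "p ! Suc t \<in> V" using sp tl by (auto intro!: subsetD[OF sp])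
    show "t \<in> (\<Union>j<n. cross (MB j) p)"
    proof (cases "isl (p ! t)")
      case False
      then obtain j where "j < n" "p ! t \<in> MB j" using inV_MB V1 by blast
      moreover have "p ! Suc t \<notin> MB j" using d False isl_MB by blast
      ultimately show ?thesis using tl by (auto simp: cross_def)
    next
      case True
      then obtain j where "j < n" "p ! Suc t \<in> MB j" using inV_MB V1 d by blast
      moreover have "p ! t \<notin> MB j" using True isl_MB by blast
      ultimately show ?thesis using tl by (auto simp: cross_def)
    qed
  qed
  have "card (\<Union>j<n. cross (MB j) p) = (\<Sum>j<n. card (cross (MB j) p))"
  proof (rule card_UN_disjoint)
    show "\<forall>i\<in>{..<n}. \<forall>j\<in>{..<n}. i \<noteq> j \<longrightarrow> cross (MB i) p \<inter> cross (MB j) p = {}"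
    proof (intro ballI impI)
      fix i j assume ij: "i \<in> {..<n}" "j \<in> {..<n}" "i \<noteq> j"
      show "cross (MB i) p \<inter> cross (MB j) p = {}"
      proof (rule ccontr)
        assume "cross (MB i) p \<inter> cross (MB j) p \<noteq> {}"
        then obtain t where t: "t \<in> cross (MB i) p" "t \<in> cross (MB j) p" by blast
        then have "t \<in> Xc p" using U ij by blast
        then have d: "isl (p ! t) \<noteq> isl (p ! Suc t)" by (simp add: Xc_def)
        from t have d1: "(p ! t \<in> MB i) \<noteq> (p ! Suc t \<in> MB i)" and d2: "(p ! t \<in> MB j) \<noteq> (p ! Suc t \<in> MB j)"
          by (auto simp: cross_def)
        show False
        proof (cases "isl (p ! t)")
          case False
          then have "p ! t \<in> MB i" "p ! t \<in> MB j" using d d1 d2 isl_MB by blast+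
          then show False using MB_disj ij by blast
        next
          case True
          then have "p ! Suc t \<in> MB i" "p ! Suc t \<in> MB j" using d d1 d2 isl_MB by blast+
          then show False using MB_disj ij by blast
        qed
      qed
    qed
  qed (auto simp: cross_fin)
  then show ?thesis using U by simp
qed

lemma ind_sum: assumes "v \<in> V"
  shows "(\<Sum>j<n. (if v \<in> GB j then 1 else 0::nat)) + (\<Sum>j<n. (if v \<in> MB j then 1 else 0)) = 1"
proof (cases "isl v")
  case True
  then obtain i where i: "i < n" "v \<in> GB i" using inV_GB assms by blast
  have "(\<Sum>j<n. (if v \<in> GB j then 1 else 0::nat)) = (\<Sum>j<n. (if j = i then 1 else 0))"
    by (rule sum.cong) (use i GB_disj in auto)
  also have "\<dots> = 1" using i by simp
  finally show ?thesis using True isl_MB by auto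
next
  case False
  then obtain i where i: "i < n" "v \<in> MB i" using inV_MB assms by blast
  have "(\<Sum>j<n. (if v \<in> MB j then 1 else 0::nat)) = (\<Sum>j<n. (if j = i then 1 else 0))"
    by (rule sum.cong) (use i MB_disj in auto)
  also have "\<dots> = 1" using i by simp
  finally show ?thesis using False isl_GB by auto
qed

lemma sum_ends:
  assumes p: "is_path V E p"
  shows "(\<Sum>j<n. ends (GB j) p) + (\<Sum>j<n. ends (MB j) p) = 2"
proof -
  have pne: "p \<noteq> []" and sp: "set p \<subseteq> V" using p by (auto simp: is_path_def)
  have h: "hd p \<in> V" "last p \<in> V" using pne sp by auto
  have "(\<Sum>j<n. ends (GB j) p) + (\<Sum>j<n. ends (MB j) p) =
    ((\<Sum>j<n. (if hd p \<in> GB j then 1 else 0::nat)) + (\<Sum>j<n. (if hd p \<in> MB j then 1 else 0))) +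
    ((\<Sum>j<n. (if last p \<in> GB j then 1 else 0::nat)) + (\<Sum>j<n. (if last p \<in> MB j then 1 else 0)))"
    by (simp add: ends_def sum.distrib)
  also have "\<dots> = 2" using ind_sum[OF h(1)] ind_sum[OF h(2)] by simp
  finally show ?thesis .
qed

definition T :: nat where "T = (\<Sum>j<n. k j + card (VM j))"

lemma card_V: "card V = T"
proof -
  have "card V = (\<Sum>j<n. card (V \<inter> GB j)) + (\<Sum>j<n. card (V \<inter> MB j))" using card_part by blast
  also have "(\<Sum>j<n. card (V \<inter> GB j)) = (\<Sum>j<n. k j)"
  proof (rule sum.cong)
    fix j assume "j \<in> {..<n}"
    then have "V \<inter> GB j = GB j" by (auto simp: GB_def)
    then show "card (V \<inter> GB j) = k j" using card_GB \<open>j \<in> {..<n}\<close> by simp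
  qed simp
  also have "(\<Sum>j<n. card (V \<inter> MB j)) = (\<Sum>j<n. card (VM j))"
  proof (rule sum.cong)
    fix j assume "j \<in> {..<n}"
    then have "V \<inter> MB j = MB j" by (auto simp: MB_def)
    then show "card (V \<inter> MB j) = card (VM j)" using card_MB \<open>j \<in> {..<n}\<close> by simp
  qed simp
  finally show ?thesis by (simp add: T_def sum.distrib)
qed

lemma upper:
  assumes p: "is_path V E p"
  shows "length p + (n - 1) * m \<le> T"
proof -
  let ?cg = "\<lambda>j. card (cross (GB j) p)" and ?cm = "\<lambda>j. card (cross (MB j) p)"
  let ?eg = "\<lambda>j. ends (GB j) p" and ?em = "\<lambda>j. ends (MB j) p"
  let ?sg = "\<lambda>j. card (set p \<inter> GB j)" and ?sm = "\<lambda>j. card (set p \<inter> MB j)"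
  have G: "(\<Sum>j<n. int m * (int (?cg j) - int (?eg j))) \<le> (\<Sum>j<n. 2 * (int (k j) - int (?sg j)))"
    by (rule sum_mono) (use ineq_G[OF p] in simp)
  have M: "(\<Sum>j<n. int m * (2 - int (?cm j) - int (?em j))) \<le> (\<Sum>j<n. 2 * (int (card (VM j)) - int (?sm j)))"
    by (rule sum_mono) (use ineq_M[OF p] in simp)
  have G1: "(\<Sum>j<n. int m * (int (?cg j) - int (?eg j))) = int m * (int (\<Sum>j<n. ?cg j) - int (\<Sum>j<n. ?eg j))"
    by (simp add: sum_distrib_left[symmetric] sum_subtractf)
  have M1: "(\<Sum>j<n. int m * (2 - int (?cm j) - int (?em j))) = int m * (2 * int n - int (\<Sum>j<n. ?cm j) - int (\<Sum>j<n. ?em j))"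
    by (simp add: sum_distrib_left[symmetric] sum_subtractf)
  have G2: "(\<Sum>j<n. 2 * (int (k j) - int (?sg j))) = 2 * (int (\<Sum>j<n. k j) - int (\<Sum>j<n. ?sg j))"
    by (simp add: sum_distrib_left[symmetric] sum_subtractf)
  have M2: "(\<Sum>j<n. 2 * (int (card (VM j)) - int (?sm j))) = 2 * (int (\<Sum>j<n. card (VM j)) - int (\<Sum>j<n. ?sm j))"
    by (simp add: sum_distrib_left[symmetric] sum_subtractf)
  have cc: "(\<Sum>j<n. ?cg j) = (\<Sum>j<n. ?cm j)" using sum_cross_G[OF p] sum_cross_M[OF p] by simp
  have ee: "int (\<Sum>j<n. ?eg j) + int (\<Sum>j<n. ?em j) = 2" using sum_ends[OF p]
    by (metis of_nat_add of_nat_numeral)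
  have key: "int m * (int (\<Sum>j<n. ?cg j) - int (\<Sum>j<n. ?eg j)) + int m * (2 * int n - int (\<Sum>j<n. ?cm j) - int (\<Sum>j<n. ?em j))
     = int m * (2 * int n - 2)"
    by (rule key_arith[OF _ ee]) (simp only: cc)
  have lp: "length p = (\<Sum>j<n. ?sg j) + (\<Sum>j<n. ?sm j)"
  proof -
    have "set p \<subseteq> V" using p by (simp add: is_path_def)
    then have "card (set p) = (\<Sum>j<n. ?sg j) + (\<Sum>j<n. ?sm j)" by (rule card_part)
    then show ?thesis using path_card[OF p] by simp
  qed
  have "int m * (2 * int n - 2) \<le> 2 * (int (\<Sum>j<n. k j) - int (\<Sum>j<n. ?sg j)) + 2 * (int (\<Sum>j<n. card (VM j)) - int (\<Sum>j<n. ?sm j))"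
    using add_mono[OF G[unfolded G1 G2] M[unfolded M1 M2]] unfolding key .
  moreover have "T = (\<Sum>j<n. k j) + (\<Sum>j<n. card (VM j))" by (simp add: T_def sum.distrib)
  ultimately show ?thesis using fin_arith lp n2 by blast
qed

end


lemma mod_inj_aux: assumes "t < (n::nat)" "t' < n" "(s + t) mod n = (s + t') mod n" "t \<le> t'" shows "t = t'"
proof -
  have "n dvd (s + t') - (s + t)" using assms(3,4) mod_eq_dvd_iff_nat[of "s + t" "s + t'" n] by simp
  moreover have "(s + t') - (s + t) = t' - t" by simp
  ultimately have "n dvd t' - t" by simp
  moreover have "t' - t < n" using assms by simp
  ultimately have "t' - t = 0" using dvd_imp_le by fastforce
  then show ?thesis using assms(4) by simp
qed

lemma mod_inj: assumes "t < (n::nat)" "t' < n" "(s + t) mod n = (s + t') mod n" shows "t = t'"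
  using mod_inj_aux[OF assms] mod_inj_aux[OF assms(2,1) assms(3)[symmetric]] by linarith

lemma rot_sum: assumes "0 < (n::nat)" shows "(\<Sum>t<n. f ((s + t) mod n)) = (\<Sum>j<n. f j)"
proof -
  let ?h = "\<lambda>t. (s + t) mod n"
  have inj: "inj_on ?h {..<n}" using mod_inj by (auto simp: inj_on_def)
  have "?h ` {..<n} \<subseteq> {..<n}" using assms by auto
  then have "?h ` {..<n} = {..<n}" using endo_inj_surj[OF _ _ inj] by simp
  then have "bij_betw ?h {..<n} {..<n}" using inj by (simp add: bij_betw_def)
  then show ?thesis by (rule sum.reindex_bij_betw)
qed

lemma rot_sum_minus: assumes "0 < (n::nat)"
  shows "(\<Sum>t<n - 1. f ((s + 1 + t) mod n)) + f (s mod n) = (\<Sum>j<n. f j)"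
proof -
  have "(\<Sum>j<n. f j) = (\<Sum>t<n. f ((s + t) mod n))" using rot_sum[OF assms, of f s] by simp
  also have "\<dots> = (\<Sum>t<Suc (n - 1). f ((s + t) mod n))" using assms by simp
  also have "\<dots> = f ((s + 0) mod n) + (\<Sum>t<n - 1. f ((s + Suc t) mod n))" by (rule sum.lessThan_Suc_shift)
  finally show ?thesis by (simp add: add.commute)
qed

lemma concat_path:
  assumes "0 < l" "\<And>t. t < l \<Longrightarrow> is_path V E (U t)"
    "\<And>t. Suc t < l \<Longrightarrow> {last (U t), hd (U (Suc t))} \<in> E"
    "\<And>t t'. t < l \<Longrightarrow> t' < l \<Longrightarrow> t \<noteq> t' \<Longrightarrow> set (U t) \<inter> set (U t') = {}"
  shows "is_path V E (concat (map U [0..<l])) \<and> hd (concat (map U [0..<l])) = hd (U 0)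
     \<and> last (concat (map U [0..<l])) = last (U (l - 1))"
  using assms
proof (induction l)
  case 0 then show ?case by simp
next
  case (Suc l)
  show ?case
  proof (cases "l = 0")
    case True
    then show ?thesis using Suc.prems by simp
  next
    case False
    have IH: "is_path V E (concat (map U [0..<l])) \<and> hd (concat (map U [0..<l])) = hd (U 0)
     \<and> last (concat (map U [0..<l])) = last (U (l - 1))"
      using Suc.IH False Suc.prems by simp
    have eq: "concat (map U [0..<Suc l]) = concat (map U [0..<l]) @ U l" by simp
    have pl: "is_path V E (U l)" using Suc.prems by simp
    have ne: "U 0 \<noteq> []" using Suc.prems(2)[of 0] by (simp add: is_path_def)
    have disj: "set (concat (map U [0..<l])) \<inter> set (U l) = {}"
    proof -
      have "set (U t) \<inter> set (U l) = {}" if "t < l" for t using Suc.prems(4)[of t l] that by simp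
      then show ?thesis unfolding set_concat by force
    qed
    have ed: "{last (concat (map U [0..<l])), hd (U l)} \<in> E"
      using IH Suc.prems(3)[of "l - 1"] False by simp
    have "is_path V E (concat (map U [0..<l]) @ U l)"
      using is_path_append[OF conjunct1[OF IH] pl disj ed] .
    moreover have "concat (map U [0..<l]) \<noteq> []" using IH by (auto simp: is_path_def)
    moreover have "U l \<noteq> []" using pl by (simp add: is_path_def)
    ultimately show ?thesis using IH eq by simp
  qed
qed

lemma concat_len: "length (concat (map U [0..<l])) = (\<Sum>t<l. length (U t))"
  by (induction l) auto

lemma concat_set: "set (concat (map U [0..<l])) = (\<Union>t<l. set (U t))"
  by auto



context ringc begin

definition Pab where "Pab j = (SOME p. is_path (VG j) (EG j) p \<and> hd p = a j \<and> last p = b j \<and> length p = k j - m)"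
lemma Pab: "j < n \<Longrightarrow> is_path (VG j) (EG j) (Pab j) \<and> hd (Pab j) = a j \<and> last (Pab j) = b j \<and> length (Pab j) = k j - m"
  unfolding Pab_def by (rule someI_ex) (rule D1ex)

definition Hxy where "Hxy j = (SOME q. is_path (VM j) (EM j) q \<and> set q = VM j \<and> hd q = x j \<and> last q = y j)"
lemma Hxy: "j < n \<Longrightarrow> is_path (VM j) (EM j) (Hxy j) \<and> set (Hxy j) = VM j \<and> hd (Hxy j) = x j \<and> last (Hxy j) = y j"
  unfolding Hxy_def by (rule someI_ex) (rule M_xy)
lemma Hxy_len: "j < n \<Longrightarrow> length (Hxy j) = card (VM j)"
  using Hxy path_card by metis

lemma set_gl: "set (map (gl j) P) \<subseteq> GB j \<longleftrightarrow> set P \<subseteq> VG j"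
  by (auto simp: gl_def)
lemma set_mr: "set (map (mr j) P) \<subseteq> MB j \<longleftrightarrow> set P \<subseteq> VM j"
  by (auto simp: mr_def)
lemma gl_mr_disj: "set (map (gl j) P) \<inter> set (map (mr j') Q) = {}"
  by (auto simp: gl_def mr_def)

lemma gm_path:
  assumes j: "j < n" and P: "is_path (VG j) (EG j) P" "last P = b j"
    and Q: "is_path (VM j) (EM j) Q" "hd Q = x j"
  shows "is_path V E (map (gl j) P @ map (mr j) Q)"
proof (rule is_path_append[OF gl_path[OF j P(1)] mr_path[OF j Q(1)] gl_mr_disj])
  have "P \<noteq> []" "Q \<noteq> []" using P Q by (auto simp: is_path_def)
  then show "{last (map (gl j) P), hd (map (mr j) Q)} \<in> E"
    using E_bx[OF j] P Q by (simp add: last_map hd_map gl_def mr_def)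
qed

definition S where "S j = map (gl j) (Pab j) @ map (mr j) (Hxy j)"

lemma S_props:
  assumes j: "j < n"
  shows "is_path V E (S j) \<and> hd (S j) = Inl (j, a j) \<and> last (S j) = Inr (j, y j)
    \<and> set (S j) \<subseteq> GB j \<union> MB j \<and> length (S j) = k j - m + card (VM j)"
proof -
  have P: "is_path (VG j) (EG j) (Pab j)" "hd (Pab j) = a j" "last (Pab j) = b j" "length (Pab j) = k j - m"
    using Pab[OF j] by auto
  have Q: "is_path (VM j) (EM j) (Hxy j)" "set (Hxy j) = VM j" "hd (Hxy j) = x j" "last (Hxy j) = y j"
    using Hxy[OF j] by auto
  have ne: "Pab j \<noteq> []" "Hxy j \<noteq> []" using P Q by (auto simp: is_path_def)
  have "set (Pab j) \<subseteq> VG j" using P by (simp add: is_path_def)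
  then have s1: "set (map (gl j) (Pab j)) \<subseteq> GB j" using set_gl by blast
  have s2: "set (map (mr j) (Hxy j)) \<subseteq> MB j" using Q set_mr by blast
  show ?thesis unfolding S_def
    using gm_path[OF j P(1,3) Q(1,3)] ne P Q s1 s2 Hxy_len[OF j]
    by (auto simp: hd_map last_map gl_def mr_def)
qed

definition Lsum where "Lsum = (\<Sum>j<n. k j - m + card (VM j))"

lemma T_Lsum: "T = Lsum + n * m"
proof -
  have "Lsum + n * m = (\<Sum>j<n. k j - m + card (VM j) + m)" by (simp add: Lsum_def sum.distrib)
  also have "\<dots> = (\<Sum>j<n. k j + card (VM j))"
  proof (rule sum.cong)
    fix j assume "j \<in> {..<n}"
    then have "m \<le> k j" using mk[of j] by simp
    then show "k j - m + card (VM j) + m = k j + card (VM j)" by simp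
  qed simp
  finally show ?thesis by (simp add: T_def)
qed

lemma blocks_disj: "j \<noteq> j' \<Longrightarrow> (GB j \<union> MB j) \<inter> (GB j' \<union> MB j') = {}"
  using GB_disj MB_disj isl_GB isl_MB by blast

lemma last_idx: "i < n \<Longrightarrow> (i + 1 + (n - 1 - 1)) mod n = pr i"
proof (cases "i = 0")
  case True then show ?thesis using n2 by (simp add: pr_def)
next
  case False
  assume i: "i < n"
  have e: "i + 1 + (n - 1 - 1) = (i - 1) + n" using n2 False by simp
  have "(i + 1 + (n - 1 - 1)) mod n = ((i - 1) + n) mod n" by (simp only: e)
  also have "\<dots> = i - 1" using i by simp
  also have "i - 1 = pr i" using False by (simp add: pr_def)
  finally show ?thesis .
qed

definition Chain where "Chain i = concat (map (\<lambda>t. S ((i + 1 + t) mod n)) [0..<n - 1])"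

lemma Chain_props:
  assumes i: "i < n"
  shows "is_path V E (Chain i) \<and> hd (Chain i) = Inl (Suc i mod n, a (Suc i mod n))
    \<and> last (Chain i) = Inr (pr i, y (pr i)) \<and> set (Chain i) \<inter> (GB i \<union> MB i) = {}
    \<and> length (Chain i) + (k i - m + card (VM i)) = Lsum"
proof -
  let ?U = "\<lambda>t. S ((i + 1 + t) mod n)"
  have n0: "0 < n" and n1: "0 < n - 1" using n2 by auto
  have Ut: "?U t \<in> {S j | j. j < n}" for t using n0 by auto
  have cp: "is_path V E (Chain i) \<and> hd (Chain i) = hd (?U 0) \<and> last (Chain i) = last (?U (n - 1 - 1))"
    unfolding Chain_def
  proof (rule concat_path[OF n1])
    show "is_path V E (?U t)" if "t < n - 1" for t using S_props n0 by simp
    show "{last (?U t), hd (?U (Suc t))} \<in> E" if "Suc t < n - 1" for t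
    proof -
      let ?j = "(i + 1 + t) mod n"
      have j: "?j < n" using n0 by simp
      have "Suc ?j mod n = (i + 1 + Suc t) mod n" by (simp add: mod_Suc_eq)
      then show ?thesis using E_ya[OF j] S_props[OF j] S_props[of "(i + 1 + Suc t) mod n"] n0 by simp
    qed
    show "set (?U t) \<inter> set (?U t') = {}" if "t < n - 1" "t' < n - 1" "t \<noteq> t'" for t t'
    proof -
      have "t < n" "t' < n" using that by auto
      then have "(i + 1 + t) mod n \<noteq> (i + 1 + t') mod n" using mod_inj[of t n t' "i + 1"] that(3) by blast
      then show ?thesis using blocks_disj S_props n0 by (meson disjoint_iff mod_less_divisor subsetD)
    qed
  qed
  have hd: "hd (Chain i) = Inl (Suc i mod n, a (Suc i mod n))" using cp S_props n0 by simp
  have lst: "last (Chain i) = Inr (pr i, y (pr i))" using cp S_props[of "(i + 1 + (n - 1 - 1)) mod n"] n0 last_idx[OF i] by simp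
  have st: "set (Chain i) \<inter> (GB i \<union> MB i) = {}"
  proof -
    have "set (?U t) \<inter> (GB i \<union> MB i) = {}" if "t < n - 1" for t
    proof -
      have "Suc t < n" "0 < n" using that by auto
      then have "(i + Suc t) mod n \<noteq> (i + 0) mod n" using mod_inj[of "Suc t" n 0 i] by blast
      then have "(i + 1 + t) mod n \<noteq> i" using i by simp
      then show ?thesis using blocks_disj S_props n0 by (meson disjoint_iff mod_less_divisor subsetD)
    qed
    then show ?thesis unfolding Chain_def concat_set by blast
  qed
  have "length (Chain i) = (\<Sum>t<n - 1. k ((i + 1 + t) mod n) - m + card (VM ((i + 1 + t) mod n)))"
    unfolding Chain_def concat_len by (rule sum.cong) (use S_props n0 in auto)
  then have "length (Chain i) + (k i - m + card (VM i)) = Lsum"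
    using rot_sum_minus[OF n0, of "\<lambda>j. k j - m + card (VM j)" i] i by (simp add: Lsum_def)
  then show ?thesis using cp hd lst st by simp
qed

lemma build:
  assumes i: "i < n" and X: "is_path V E X" "set X \<subseteq> GB i \<union> MB i" "last X = Inr (i, y i)"
    and Z: "is_path V E Z" "set Z \<subseteq> GB i" "hd Z = Inl (i, a i)"
    and XZ: "set X \<inter> set Z = {}" and len: "length X + length Z = k i + card (VM i)"
  shows "\<exists>P. is_path V E P \<and> hd P = hd X \<and> last P = last Z \<and> length P + (n - 1) * m = T"
proof -
  have C: "is_path V E (Chain i)" "hd (Chain i) = Inl (Suc i mod n, a (Suc i mod n))"
    "last (Chain i) = Inr (pr i, y (pr i))" "set (Chain i) \<inter> (GB i \<union> MB i) = {}"
    "length (Chain i) + (k i - m + card (VM i)) = Lsum"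
    using Chain_props[OF i] by auto
  have neX: "X \<noteq> []" and neZ: "Z \<noteq> []" and neC: "Chain i \<noteq> []" using X Z C by (auto simp: is_path_def)
  have CZ: "is_path V E (Chain i @ Z)"
  proof (rule is_path_append[OF C(1) Z(1)])
    show "set (Chain i) \<inter> set Z = {}" using C(4) Z(2) by blast
    show "{last (Chain i), hd Z} \<in> E" using E_ya[OF pr_lt[OF i]] Suc_pr[OF i] C(3) Z(3) by simp
  qed
  have P: "is_path V E (X @ Chain i @ Z)"
  proof (rule is_path_append[OF X(1) CZ])
    show "set X \<inter> set (Chain i @ Z) = {}" using C(4) X(2) XZ by auto
    show "{last X, hd (Chain i @ Z)} \<in> E" using E_ya[OF i] X(3) C(2) neC by simp
  qed
  have "length (X @ Chain i @ Z) + (n - 1) * m = T"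
  proof -
    have "m \<le> k i" using mk[OF i] by simp
    then have "length (X @ Chain i @ Z) = Lsum + m" using C(5) len by simp
    moreover have "n * m = (n - 1) * m + m" using n2 by (cases n) auto
    ultimately show ?thesis using T_Lsum by simp
  qed
  then show ?thesis using P neX neZ by (intro exI[of _ "X @ Chain i @ Z"]) simp
qed

end


context ringc begin

definition Tp where "Tp j = map (mr j) (Hxy j) @ map (gl (Suc j mod n)) (Pab (Suc j mod n))"

lemma Tp_props:
  assumes j: "j < n"
  shows "is_path V E (Tp j) \<and> hd (Tp j) = Inr (j, x j) \<and> last (Tp j) = Inl (Suc j mod n, b (Suc j mod n))
    \<and> set (Tp j) \<subseteq> MB j \<union> GB (Suc j mod n) \<and> length (Tp j) = card (VM j) + (k (Suc j mod n) - m)"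
proof -
  let ?j = "Suc j mod n"
  have j': "?j < n" using j by simp
  have P: "is_path (VG ?j) (EG ?j) (Pab ?j)" "hd (Pab ?j) = a ?j" "last (Pab ?j) = b ?j" "length (Pab ?j) = k ?j - m"
    using Pab[OF j'] by auto
  have Q: "is_path (VM j) (EM j) (Hxy j)" "set (Hxy j) = VM j" "hd (Hxy j) = x j" "last (Hxy j) = y j"
    using Hxy[OF j] by auto
  have ne: "Pab ?j \<noteq> []" "Hxy j \<noteq> []" using P Q by (auto simp: is_path_def)
  have "set (Pab ?j) \<subseteq> VG ?j" using P by (simp add: is_path_def)
  then have s1: "set (map (gl ?j) (Pab ?j)) \<subseteq> GB ?j" using set_gl by blast
  have s2: "set (map (mr j) (Hxy j)) \<subseteq> MB j" using Q set_mr by blast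
  have pth: "is_path V E (Tp j)" unfolding Tp_def
  proof (rule is_path_append[OF mr_path[OF j Q(1)] gl_path[OF j' P(1)]])
    show "set (map (mr j) (Hxy j)) \<inter> set (map (gl ?j) (Pab ?j)) = {}" using gl_mr_disj by blast
    show "{last (map (mr j) (Hxy j)), hd (map (gl ?j) (Pab ?j))} \<in> E"
      using E_ya[OF j] ne P Q by (simp add: last_map hd_map gl_def mr_def)
  qed
  show ?thesis unfolding Tp_def
    using pth ne P Q s1 s2 Hxy_len[OF j] unfolding Tp_def
    by (auto simp: hd_map last_map gl_def mr_def)
qed

definition ChainT where "ChainT i = concat (map (\<lambda>t. Tp ((i + 1 + t) mod n)) [0..<n - 1])"

lemma ChainT_props:
  assumes i: "i < n"
  shows "is_path V E (ChainT i) \<and> hd (ChainT i) = Inr (Suc i mod n, x (Suc i mod n))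
    \<and> last (ChainT i) = Inl (i, b i) \<and> set (ChainT i) \<inter> (MB i \<union> GB (Suc i mod n)) = {}
    \<and> length (ChainT i) + card (VM i) + (k (Suc i mod n) - m) = Lsum"
proof -
  let ?U = "\<lambda>t. Tp ((i + 1 + t) mod n)"
  have n0: "0 < n" and n1: "0 < n - 1" using n2 by auto
  have cp: "is_path V E (ChainT i) \<and> hd (ChainT i) = hd (?U 0) \<and> last (ChainT i) = last (?U (n - 1 - 1))"
    unfolding ChainT_def
  proof (rule concat_path[OF n1])
    show "is_path V E (?U t)" if "t < n - 1" for t using Tp_props n0 by simp
    show "{last (?U t), hd (?U (Suc t))} \<in> E" if "Suc t < n - 1" for t
    proof -
      let ?j = "(i + 1 + t) mod n"
      have j: "?j < n" using n0 by simp
      have e: "Suc ?j mod n = (i + 1 + Suc t) mod n" by (simp add: mod_Suc_eq)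
      have j2: "Suc ?j mod n < n" using n0 by simp
      have "{Inl (Suc ?j mod n, b (Suc ?j mod n)), Inr (Suc ?j mod n, x (Suc ?j mod n))} \<in> E"
        using E_bx[OF j2] .
      then show ?thesis using Tp_props[OF j] Tp_props[OF j2] e by (simp add: insert_commute)
    qed
    show "set (?U t) \<inter> set (?U t') = {}" if "t < n - 1" "t' < n - 1" "t \<noteq> t'" for t t'
    proof -
      have tn: "t < n" "t' < n" using that by auto
      then have d1: "(i + 1 + t) mod n \<noteq> (i + 1 + t') mod n" using mod_inj[of t n t' "i + 1"] that(3) by blast
      have "(Suc i + 1 + t) mod n \<noteq> (Suc i + 1 + t') mod n" using mod_inj[of t n t' "Suc i + 1"] that(3) tn by blast
      then have d2: "Suc ((i + 1 + t) mod n) mod n \<noteq> Suc ((i + 1 + t') mod n) mod n" by (simp add: mod_Suc_eq)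
      have s1: "set (?U t) \<subseteq> MB ((i + 1 + t) mod n) \<union> GB (Suc ((i + 1 + t) mod n) mod n)" using Tp_props n0 by simp
      have s2: "set (?U t') \<subseteq> MB ((i + 1 + t') mod n) \<union> GB (Suc ((i + 1 + t') mod n) mod n)" using Tp_props n0 by simp
      show ?thesis using s1 s2 d1 d2 MB_disj GB_disj isl_GB isl_MB by blast
    qed
  qed
  have hd: "hd (ChainT i) = Inr (Suc i mod n, x (Suc i mod n))" using cp Tp_props n0 by simp
  have lst: "last (ChainT i) = Inl (i, b i)"
    using cp Tp_props[of "(i + 1 + (n - 1 - 1)) mod n"] n0 last_idx[OF i] Suc_pr[OF i] by simp
  have st: "set (ChainT i) \<inter> (MB i \<union> GB (Suc i mod n)) = {}"
  proof -
    have "set (?U t) \<inter> (MB i \<union> GB (Suc i mod n)) = {}" if "t < n - 1" for t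
    proof -
      have tn: "Suc t < n" "0 < n" using that by auto
      then have "(i + Suc t) mod n \<noteq> (i + 0) mod n" using mod_inj[of "Suc t" n 0 i] by blast
      then have d1: "(i + 1 + t) mod n \<noteq> i" using i by simp
      have "(Suc i + Suc t) mod n \<noteq> (Suc i + 0) mod n" using mod_inj[of "Suc t" n 0 "Suc i"] tn by blast
      then have d2: "Suc ((i + 1 + t) mod n) mod n \<noteq> Suc i mod n" by (simp add: mod_Suc_eq)
      have s1: "set (?U t) \<subseteq> MB ((i + 1 + t) mod n) \<union> GB (Suc ((i + 1 + t) mod n) mod n)" using Tp_props n0 by simp
      show ?thesis using s1 d1 d2 MB_disj GB_disj isl_GB isl_MB by blast
    qed
    then show ?thesis unfolding ChainT_def concat_set by blast
  qed
  let ?g = "\<lambda>j. k j - m" and ?h = "\<lambda>j. card (VM j)"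
  have "length (ChainT i) = (\<Sum>t<n - 1. ?h ((i + 1 + t) mod n) + ?g ((Suc i + 1 + t) mod n))"
    unfolding ChainT_def concat_len
  proof (rule sum.cong)
    fix t assume "t \<in> {..<n - 1}"
    have "Suc ((i + 1 + t) mod n) mod n = (Suc i + 1 + t) mod n" by (simp add: mod_Suc_eq)
    then show "length (Tp ((i + 1 + t) mod n)) = ?h ((i + 1 + t) mod n) + ?g ((Suc i + 1 + t) mod n)"
      using Tp_props[of "(i + 1 + t) mod n"] n0 by simp
  qed simp
  also have "\<dots> = (\<Sum>t<n - 1. ?h ((i + 1 + t) mod n)) + (\<Sum>t<n - 1. ?g ((Suc i + 1 + t) mod n))"
    by (rule sum.distrib)
  finally have L: "length (ChainT i) = (\<Sum>t<n - 1. ?h ((i + 1 + t) mod n)) + (\<Sum>t<n - 1. ?g ((Suc i + 1 + t) mod n))" .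
  have r1: "(\<Sum>t<n - 1. ?h ((i + 1 + t) mod n)) + ?h i = (\<Sum>j<n. ?h j)"
    using rot_sum_minus[OF n0, of ?h i] i by simp
  have r2: "(\<Sum>t<n - 1. ?g ((Suc i + 1 + t) mod n)) + ?g (Suc i mod n) = (\<Sum>j<n. ?g j)"
    using rot_sum_minus[OF n0, of ?g "Suc i"] by simp
  have "Lsum = (\<Sum>j<n. ?g j) + (\<Sum>j<n. ?h j)" by (simp add: Lsum_def sum.distrib)
  then have "length (ChainT i) + card (VM i) + (k (Suc i mod n) - m) = Lsum" using L r1 r2 by simp
  then show ?thesis using cp hd lst st by simp
qed

lemma build2:
  assumes i: "i < n" and X: "is_path V E X" "set X \<subseteq> GB (Suc i mod n)" "last X = Inl (Suc i mod n, b (Suc i mod n))"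
    and Z: "is_path V E Z" "set Z \<subseteq> MB i" "hd Z = Inr (i, x i)"
    and len: "length X = k (Suc i mod n)" "length Z = card (VM i)"
  shows "\<exists>P. is_path V E P \<and> hd P = hd X \<and> last P = last Z \<and> length P + (n - 1) * m = T"
proof -
  let ?i = "Suc i mod n"
  have i': "?i < n" using i by simp
  have C: "is_path V E (ChainT i)" "hd (ChainT i) = Inr (?i, x ?i)"
    "last (ChainT i) = Inl (i, b i)" "set (ChainT i) \<inter> (MB i \<union> GB ?i) = {}"
    "length (ChainT i) + card (VM i) + (k ?i - m) = Lsum"
    using ChainT_props[OF i] by auto
  have neX: "X \<noteq> []" and neZ: "Z \<noteq> []" and neC: "ChainT i \<noteq> []" using X Z C by (auto simp: is_path_def)
  have CZ: "is_path V E (ChainT i @ Z)"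
  proof (rule is_path_append[OF C(1) Z(1)])
    show "set (ChainT i) \<inter> set Z = {}" using C(4) Z(2) by blast
    show "{last (ChainT i), hd Z} \<in> E" using E_bx[OF i] C(3) Z(3) by simp
  qed
  have P: "is_path V E (X @ ChainT i @ Z)"
  proof (rule is_path_append[OF X(1) CZ])
    have "set X \<inter> set (ChainT i) = {}" using C(4) X(2) by blast
    moreover have "set X \<inter> set Z = {}"
    proof (rule ccontr)
      assume "set X \<inter> set Z \<noteq> {}"
      then obtain v where "v \<in> GB ?i" "v \<in> MB i" using X(2) Z(2) by blast
      then show False using isl_GB isl_MB by blast
    qed
    ultimately show "set X \<inter> set (ChainT i @ Z) = {}" by auto
    show "{last X, hd (ChainT i @ Z)} \<in> E" using E_bx[OF i'] X(3) C(2) neC by simp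
  qed
  have "length (X @ ChainT i @ Z) + (n - 1) * m = T"
  proof -
    have "m \<le> k ?i" using mk[OF i'] by simp
    then have "length (X @ ChainT i @ Z) = Lsum + m" using C(5) len by simp
    moreover have "n * m = (n - 1) * m + m" using n2 by (cases n) auto
    ultimately show ?thesis using T_Lsum by simp
  qed
  then show ?thesis using P neX neZ by (intro exI[of _ "X @ ChainT i @ Z"]) simp
qed

end


context ringc begin

lemma len_ham: "is_path V' E' p \<Longrightarrow> set p = W \<Longrightarrow> length p = card W"
  using path_card by metis

lemma lower:
  assumes v: "v \<in> V"
  shows "\<exists>P. is_path V E P \<and> hd P = v \<and> length P + (n - 1) * m = T"
proof (cases v)
  case (Inl v0)
  then obtain i w where vw: "v = Inl (i, w)" by (cases v0) auto
  then have i: "i < n" and w: "w \<in> VG i" using v by auto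
  have Hm: "is_path V E (map (mr i) (Hxy i))" "set (map (mr i) (Hxy i)) \<subseteq> MB i"
    "last (map (mr i) (Hxy i)) = Inr (i, y i)" "length (map (mr i) (Hxy i)) = card (VM i)"
  proof -
    have h: "is_path (VM i) (EM i) (Hxy i)" "set (Hxy i) = VM i" "last (Hxy i) = y i" using Hxy[OF i] by auto
    have ne: "Hxy i \<noteq> []" using h(1) by (simp add: is_path_def)
    show "is_path V E (map (mr i) (Hxy i))" using mr_path[OF i h(1)] .
    show "set (map (mr i) (Hxy i)) \<subseteq> MB i" using set_mr h(2) by blast
    show "last (map (mr i) (Hxy i)) = Inr (i, y i)" using ne h(3) by (simp add: last_map mr_def)
    show "length (map (mr i) (Hxy i)) = card (VM i)" using Hxy_len[OF i] by simp
  qed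
  have k1: "1 \<le> k i" using mk[OF i] by simp
  have kG: "card (VG i) = k i" using G_card[OF i] .
  have fG: "finite (VG i)" using G_fin[OF i] .
  show ?thesis
  proof (cases "w = a i")
    case True
    obtain D where D: "is_path (VG i) (EG i) D" "hd D = b i" "set D = VG i - {a i}" using D2b[OF i] by blast
    let ?X = "map (gl i) (rev D) @ map (mr i) (Hxy i)" and ?Z = "map (gl i) [a i]"
    have lD: "length D = k i - 1" using len_ham[OF D(1,3)] kG a_in[OF i] fG by simp
    have X: "is_path V E ?X"
      using gm_path[OF i is_path_rev[OF D(1)] _ conjunct1[OF Hxy[OF i]]] D Hxy[OF i]
      by (auto simp: last_rev is_path_def)
    have sX: "set ?X \<subseteq> GB i \<union> MB i" using D Hm by (auto simp: gl_def)
    have lX: "last ?X = Inr (i, y i)" using Hm Hxy[OF i] by (auto simp: is_path_def)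
    have Z: "is_path V E ?Z" using gl_path[OF i is_path_single[OF a_in[OF i]]] .
    have XZ: "set ?X \<inter> set ?Z = {}" using D by (auto simp: gl_def mr_def)
    have "\<exists>P. is_path V E P \<and> hd P = hd ?X \<and> last P = last ?Z \<and> length P + (n - 1) * m = T"
      by (rule build[OF i X sX lX Z]) (use XZ lD k1 Hm a_in[OF i] in \<open>auto simp: gl_def\<close>)
    then obtain P where P: "is_path V E P" "last P = Inl (i, a i)" "length P + (n - 1) * m = T"
      by (auto simp: gl_def)
    show ?thesis using is_path_rev[OF P(1)] P vw True P(1)
      by (intro exI[of _ "rev P"]) (auto simp: hd_rev is_path_def)
  next
    case na: False
    show ?thesis
    proof (cases "w = b i")
      case True
      obtain D where D: "is_path (VG i) (EG i) D" "hd D = a i" "set D = VG i - {b i}" using D2a[OF i] by blast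
      let ?X = "map (gl i) [b i] @ map (mr i) (Hxy i)" and ?Z = "map (gl i) D"
      have lD: "length D = k i - 1" using len_ham[OF D(1,3)] kG b_in[OF i] fG by simp
      have X: "is_path V E ?X"
        using gm_path[OF i is_path_single[OF b_in[OF i]] _ conjunct1[OF Hxy[OF i]]] Hxy[OF i] by auto
      have sX: "set ?X \<subseteq> GB i \<union> MB i" using b_in[OF i] Hm by (auto simp: gl_def)
      have lX: "last ?X = Inr (i, y i)" using Hm Hxy[OF i] by (auto simp: is_path_def)
      have Z: "is_path V E ?Z" using gl_path[OF i D(1)] .
      have sZ: "set ?Z \<subseteq> GB i" using D by (auto simp: gl_def is_path_def)
      have hZ: "hd ?Z = Inl (i, a i)" using D by (auto simp: gl_def is_path_def hd_map)
      have XZ: "set ?X \<inter> set ?Z = {}" using D by (auto simp: gl_def mr_def)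
      have "\<exists>P. is_path V E P \<and> hd P = hd ?X \<and> last P = last ?Z \<and> length P + (n - 1) * m = T"
        by (rule build[OF i X sX lX Z sZ hZ XZ]) (use lD k1 Hm in simp)
      then show ?thesis using vw True by (auto simp: gl_def)
    next
      case nb: False
      obtain P0 Q0 where PQ: "is_path (VG i) (EG i) P0" "is_path (VG i) (EG i) Q0" "set P0 \<inter> set Q0 = {}"
        "set P0 \<union> set Q0 = VG i" "hd P0 = w" "(last P0 = a i \<and> hd Q0 = b i) \<or> (last P0 = b i \<and> hd Q0 = a i)"
        using D4[OF i, of w] w na nb by blast
      have lPQ: "length P0 + length Q0 = k i"
      proof -
        have "card (set P0 \<union> set Q0) = card (set P0) + card (set Q0)"
          by (rule card_Un_disjoint) (use PQ(3) in auto)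
        then show ?thesis using PQ(4) kG path_card[OF PQ(1)] path_card[OF PQ(2)] by simp
      qed
      have neP: "P0 \<noteq> []" and neQ: "Q0 \<noteq> []" using PQ by (auto simp: is_path_def)
      have sP: "set P0 \<subseteq> VG i" and sQ: "set Q0 \<subseteq> VG i" using PQ(4) by auto
      from PQ(6) show ?thesis
      proof
        assume h: "last P0 = b i \<and> hd Q0 = a i"
        let ?X = "map (gl i) P0 @ map (mr i) (Hxy i)" and ?Z = "map (gl i) Q0"
        have X: "is_path V E ?X"
          using gm_path[OF i PQ(1) _ conjunct1[OF Hxy[OF i]]] Hxy[OF i] h by auto
        have sX: "set ?X \<subseteq> GB i \<union> MB i" using sP Hm by (auto simp: gl_def)
        have lX: "last ?X = Inr (i, y i)" using Hm Hxy[OF i] by (auto simp: is_path_def)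
        have Z: "is_path V E ?Z" using gl_path[OF i PQ(2)] .
        have sZ: "set ?Z \<subseteq> GB i" using sQ by (auto simp: gl_def)
        have hZ: "hd ?Z = Inl (i, a i)" using h neQ by (auto simp: gl_def hd_map)
        have XZ: "set ?X \<inter> set ?Z = {}" using PQ(3) by (auto simp: gl_def mr_def)
        have "\<exists>P. is_path V E P \<and> hd P = hd ?X \<and> last P = last ?Z \<and> length P + (n - 1) * m = T"
          by (rule build[OF i X sX lX Z sZ hZ XZ]) (use lPQ Hm in simp)
        then show ?thesis using vw PQ(5) neP by (auto simp: gl_def hd_map)
      next
        assume h: "last P0 = a i \<and> hd Q0 = b i"
        let ?X = "map (gl i) (rev Q0) @ map (mr i) (Hxy i)" and ?Z = "map (gl i) (rev P0)"
        have X: "is_path V E ?X"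
          using gm_path[OF i is_path_rev[OF PQ(2)] _ conjunct1[OF Hxy[OF i]]] Hxy[OF i] h neQ
          by (auto simp: last_rev)
        have sX: "set ?X \<subseteq> GB i \<union> MB i" using sQ Hm by (auto simp: gl_def)
        have lX: "last ?X = Inr (i, y i)" using Hm Hxy[OF i] by (auto simp: is_path_def)
        have Z: "is_path V E ?Z" using gl_path[OF i is_path_rev[OF PQ(1)]] .
        have sZ: "set ?Z \<subseteq> GB i" using sP by (auto simp: gl_def)
        have hZ: "hd ?Z = Inl (i, a i)" using h neP by (auto simp: gl_def hd_map hd_rev)
        have XZ: "set ?X \<inter> set ?Z = {}" using PQ(3) by (auto simp: gl_def mr_def)
        have "\<exists>P. is_path V E P \<and> hd P = hd ?X \<and> last P = last ?Z \<and> length P + (n - 1) * m = T"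
          by (rule build[OF i X sX lX Z sZ hZ XZ]) (use lPQ Hm in simp)
        then obtain P where P: "is_path V E P" "last P = Inl (i, w)" "length P + (n - 1) * m = T"
          using PQ(5) neP by (auto simp: gl_def last_map last_rev)
        show ?thesis using is_path_rev[OF P(1)] P vw P(1)
          by (intro exI[of _ "rev P"]) (auto simp: hd_rev is_path_def)
      qed
    qed
  qed
next
  case (Inr v0)
  then obtain i w where vw: "v = Inr (i, w)" by (cases v0) auto
  then have i: "i < n" and w: "w \<in> VM i" using v by auto
  obtain q where q: "is_path (VM i) (EM i) q" "set q = VM i" "hd q = w" "last q = x i \<or> last q = y i"
    using M_ham[OF i w] by blast
  have lq: "length q = card (VM i)" using len_ham[OF q(1,2)] .
  have neq: "q \<noteq> []" using q by (auto simp: is_path_def)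
  show ?thesis
  proof (cases "last q = y i")
    case True
    obtain D where D: "is_path (VG i) (EG i) D" "hd D = a i" "set D = VG i" using D3a[OF i] by blast
    let ?X = "map (mr i) q" and ?Z = "map (gl i) D"
    have X: "is_path V E ?X" using mr_path[OF i q(1)] .
    have sX: "set ?X \<subseteq> GB i \<union> MB i" using q by (auto simp: mr_def)
    have lX: "last ?X = Inr (i, y i)" using True neq by (simp add: last_map mr_def)
    have Z: "is_path V E ?Z" using gl_path[OF i D(1)] .
    have sZ: "set ?Z \<subseteq> GB i" using D by (auto simp: gl_def)
    have hZ: "hd ?Z = Inl (i, a i)" using D by (auto simp: gl_def is_path_def hd_map)
    have XZ: "set ?X \<inter> set ?Z = {}" by (auto simp: gl_def mr_def)
    have lD: "length D = k i" using len_ham[OF D(1,3)] G_card[OF i] by simp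
    have "\<exists>P. is_path V E P \<and> hd P = hd ?X \<and> last P = last ?Z \<and> length P + (n - 1) * m = T"
      by (rule build[OF i X sX lX Z sZ hZ XZ]) (use lD lq in simp)
    then show ?thesis using vw q(3) neq by (auto simp: mr_def hd_map)
  next
    case False
    then have lx: "last q = x i" using q(4) by simp
    let ?i = "Suc i mod n"
    have i': "?i < n" using i by simp
    obtain D where D: "is_path (VG ?i) (EG ?i) D" "hd D = b ?i" "set D = VG ?i" using D3b[OF i'] by blast
    have neD: "D \<noteq> []" using D by (auto simp: is_path_def)
    let ?X = "map (gl ?i) (rev D)" and ?Z = "map (mr i) (rev q)"
    have X: "is_path V E ?X" using gl_path[OF i' is_path_rev[OF D(1)]] .
    have sX: "set ?X \<subseteq> GB ?i" using D by (auto simp: gl_def)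
    have lX: "last ?X = Inl (?i, b ?i)" using D neD by (simp add: last_map last_rev gl_def)
    have Z: "is_path V E ?Z" using mr_path[OF i is_path_rev[OF q(1)]] .
    have sZ: "set ?Z \<subseteq> MB i" using q by (auto simp: mr_def)
    have hZ: "hd ?Z = Inr (i, x i)" using lx neq by (simp add: hd_map hd_rev mr_def)
    have lD: "length ?X = k ?i" using len_ham[OF D(1,3)] G_card[OF i'] by simp
    have "\<exists>P. is_path V E P \<and> hd P = hd ?X \<and> last P = last ?Z \<and> length P + (n - 1) * m = T"
      by (rule build2[OF i X sX lX Z sZ hZ lD]) (use lq in simp)
    then obtain P where P: "is_path V E P" "last P = Inr (i, w)" "length P + (n - 1) * m = T"
      using q(3) neq by (auto simp: mr_def last_map last_rev)
    show ?thesis using is_path_rev[OF P(1)] P vw P(1)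
      by (intro exI[of _ "rev P"]) (auto simp: hd_rev is_path_def)
  qed
qed

end


context ringc begin

lemma reach_refl: "v \<in> V \<Longrightarrow> reach V E v v"
  unfolding reach_def by (intro exI[of _ "[v]"]) (simp add: is_path_single)

lemma reach_ai: "i < n \<Longrightarrow> reach V E (Inl (0, a 0)) (Inl (i, a i))"
proof (induction i)
  case 0
  have "Inl (0, a 0) \<in> V" using a_in[of 0] n2 by simp
  then show ?case using reach_refl by simp
next
  case (Suc i)
  then have i: "i < n" by simp
  have s: "is_path V E (S i)" "hd (S i) = Inl (i, a i)" "last (S i) = Inr (i, y i)" using S_props[OF i] by auto
  have r1: "reach V E (Inl (i, a i)) (Inr (i, y i))" unfolding reach_def using s by blast
  have "Suc i mod n = Suc i" using Suc.prems by simp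
  then have e: "{Inr (i, y i), Inl (Suc i, a (Suc i))} \<in> E" using E_ya[OF i] by simp
  have r2: "reach V E (Inr (i, y i)) (Inl (Suc i, a (Suc i)))"
  proof (rule reach_edge[OF e])
    show "Inr (i, y i) \<in> V" using y_in[OF i] i by simp
    show "Inl (Suc i, a (Suc i)) \<in> V" using a_in[OF Suc.prems] Suc.prems by simp
  qed simp
  show ?case using reach_trans[OF reach_trans[OF Suc.IH[OF i] r1] r2] .
qed

lemma reach_all: assumes v: "v \<in> V" shows "reach V E (Inl (0, a 0)) v"
proof (cases v)
  case (Inl v0)
  then obtain i w where vw: "v = Inl (i, w)" by (cases v0) auto
  then have i: "i < n" and w: "w \<in> VG i" using v by auto
  obtain D where D: "is_path (VG i) (EG i) D" "hd D = a i" "set D = VG i" using D3a[OF i] by blast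
  have "reach V E (hd (map (gl i) D)) (Inl (i, w))"
    by (rule reach_path_prefix[OF gl_path[OF i D(1)]]) (use D w in \<open>auto simp: gl_def\<close>)
  moreover have "hd (map (gl i) D) = Inl (i, a i)" using D by (auto simp: hd_map gl_def is_path_def)
  ultimately have "reach V E (Inl (i, a i)) (Inl (i, w))" by simp
  then show ?thesis using reach_trans[OF reach_ai[OF i]] vw by simp
next
  case (Inr v0)
  then obtain i w where vw: "v = Inr (i, w)" by (cases v0) auto
  then have i: "i < n" and w: "w \<in> VM i" using v by auto
  have s: "is_path V E (S i)" "hd (S i) = Inl (i, a i)" "set (S i) \<subseteq> GB i \<union> MB i" using S_props[OF i] by auto
  have "Inr (i, w) \<in> set (S i)" using w Hxy[OF i] by (auto simp: S_def mr_def)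
  then have "reach V E (hd (S i)) (Inr (i, w))" by (rule reach_path_prefix[OF s(1)])
  then have "reach V E (Inl (i, a i)) (Inr (i, w))" using s(2) by simp
  then show ?thesis using reach_trans[OF reach_ai[OF i]] vw by simp
qed

lemma connected: "connected_graph V E"
  unfolding connected_graph_def
proof (intro ballI)
  fix u v assume u: "u \<in> V" and v: "v \<in> V"
  have "reach V E u v" using reach_trans[OF reach_sym[OF reach_all[OF u]] reach_all[OF v]] .
  then show "\<exists>p. is_path V E p \<and> hd p = u \<and> last p = v" by (simp add: reach_def)
qed

lemma tau_val: assumes v: "v \<in> V" shows "tau V E v = T - (n - 1) * m"
  unfolding tau_def
proof (rule Max_eqI)
  show "finite {length p |p. is_path V E p \<and> hd p = v}"
  proof (rule finite_subset[of _ "{..T}"])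
    show "{length p |p. is_path V E p \<and> hd p = v} \<subseteq> {..T}"
    proof
      fix z assume "z \<in> {length p |p. is_path V E p \<and> hd p = v}"
      then obtain p where "is_path V E p" "z = length p" by blast
      then show "z \<in> {..T}" using upper[of p] by simp
    qed
  qed simp
  show "yy \<le> T - (n - 1) * m" if yy_in: "yy \<in> {length p |p. is_path V E p \<and> hd p = v}" for yy
  proof -
    obtain p where "is_path V E p" "yy = length p" using yy_in by blast
    then show ?thesis using upper[of p] by simp
  qed
  obtain P where "is_path V E P" "hd P = v" "length P + (n - 1) * m = T" using lower[OF v] by blast
  then show "T - (n - 1) * m \<in> {length p |p. is_path V E p \<and> hd p = v}" by force
qed

lemma detour: "detour_graph V E"
  unfolding detour_graph_def using tau_val by simp

lemma nontrace: "\<not> traceable V E"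
proof
  assume "traceable V E"
  then obtain p where p: "is_path V E p" "set p = V" by (auto simp: traceable_def)
  have "length p = T" using path_card[OF p(1)] p(2) card_V by simp
  then have "(n - 1) * m = 0" using upper[OF p(1)] by simp
  then show False using n2 m0 by simp
qed

end

theorem theorem2p24:
  fixes n m :: nat and k :: "nat \<Rightarrow> nat"
    and VG :: "nat \<Rightarrow> 'a set" and EG :: "nat \<Rightarrow> 'a set set" and a b :: "nat \<Rightarrow> 'a"
    and VM :: "nat \<Rightarrow> 'b set" and EM :: "nat \<Rightarrow> 'b set set" and x y :: "nat \<Rightarrow> 'b"
  assumes "n \<ge> 2" and "m > 0"
    and "\<And>i. i < n \<Longrightarrow> k i > 0"
    and "\<And>i. i < n \<Longrightarrow> m + 2 \<le> k i"
    and "\<And>i. i < n \<Longrightarrow> inflator (VG i) (EG i) (k i) m (a i) (b i)"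
    and "\<And>i. i < n \<Longrightarrow> hctv (VM i) (EM i) (x i) (y i)"
    and "\<And>i. i < n \<Longrightarrow> card (VM i) \<ge> m"
  shows "connected_graph (cyc_V n VG VM) (cyc_E n EG EM a b x y)
       \<and> \<not> traceable (cyc_V n VG VM) (cyc_E n EG EM a b x y)
       \<and> detour_graph (cyc_V n VG VM) (cyc_E n EG EM a b x y)"
proof -
  interpret R: ringc n m k VG EG a b VM EM x y
    by (unfold_locales) (use assms in auto)
  show ?thesis using R.connected R.nontrace R.detour by simp
qed


end
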